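(* Let $P$ be a polyhedron in $\mathbb{R}^3$ and let $v$ be a strictly convex vertex of $P$. Then truncating $P$ slightly at $v$ (cutting off $v$ by a plane at sufficiently small distance $t>0$ from $v$) and then rescaling the resulting polyhedron to have the same volume as $P$ yields a polyhedron of strictly smaller surface area than $P$. *)

theory Defs
  imports "HOL-Analysis.Analysis"
begin

type_synonym pt3 = "real^3"

definition tri_area :: "pt3 \<Rightarrow> pt3 \<Rightarrow> pt3 \<Rightarrow> real" where
  "tri_area a b c = norm (cross3 (b - a) (c - a)) / 2"

definition triangulates :: "(pt3 \<times> pt3 \<times> pt3) set \<Rightarrow> pt3 set \<Rightarrow> bool" where
  "triangulates T S \<longleftrightarrow> finite T
     \<and> (\<forall>(a,b,c)\<in>T. \<not> collinear {a,b,c})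
     \<and> S = (\<Union>(a,b,c)\<in>T. convex hull {a,b,c})
     \<and> (\<forall>t1\<in>T. \<forall>t2\<in>T. t1 \<noteq> t2 \<longrightarrow>
          rel_interior (convex hull {fst t1, fst (snd t1), snd (snd t1)}) \<inter>
          rel_interior (convex hull {fst t2, fst (snd t2), snd (snd t2)}) = {})"

text \<open>A polyhedron: a compact solid (closure of its interior) whose boundary is
  a finite union of polygons (equivalently, triangles).\<close>
definition polyhedron :: "pt3 set \<Rightarrow> bool" where
  "polyhedron P \<longleftrightarrow> compact P \<and> closure (interior P) = P \<and> (\<exists>T. triangulates T (frontier P))"

definition surface_area :: "pt3 set \<Rightarrow> real" where
  "surface_area P = (THE A. \<exists>T. triangulates T (frontier P) \<and> A = (\<Sum>(a,b,c)\<in>T. tri_area a b c))"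

definition volume :: "pt3 set \<Rightarrow> real" where
  "volume P = measure lebesgue P"

definition strictly_convex_vertex :: "pt3 set \<Rightarrow> pt3 \<Rightarrow> bool" where
  "strictly_convex_vertex P v \<longleftrightarrow> v \<in> P \<and>
     (\<exists>r>0. convex (P \<inter> cball v r) \<and>
        (\<exists>u. \<forall>x\<in>P \<inter> cball v r. x \<noteq> v \<longrightarrow> inner (x - v) u > 0))"

text \<open>Truncation of P at v by the plane {x. (x - v) . u = t} (u a unit vector),
  removing only the cap near v (inside ball v r).\<close>
definition truncate :: "pt3 set \<Rightarrow> pt3 \<Rightarrow> pt3 \<Rightarrow> real \<Rightarrow> real \<Rightarrow> pt3 set" where
  "truncate P v u r t = P - {x. x \<in> ball v r \<and> inner (x - v) u < t}"

definition rescale_to_volume :: "real \<Rightarrow> pt3 set \<Rightarrow> pt3 set" where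
  "rescale_to_volume V Q = (\<lambda>x. (V / volume Q) powr (1/3) *\<^sub>R x) ` Q"

end

theory Submission
  imports Defs
begin

unbundle cross3_syntax

definition pmap :: "pt3 \<Rightarrow> pt3 \<Rightarrow> pt3 \<Rightarrow> real^2 \<Rightarrow> pt3" where
  "pmap p e1 e2 z = p + (z$1) *\<^sub>R e1 + (z$2) *\<^sub>R e2"

definition orthon :: "pt3 \<Rightarrow> pt3 \<Rightarrow> bool" where
  "orthon e1 e2 \<longleftrightarrow> e1 \<bullet> e1 = 1 \<and> e2 \<bullet> e2 = 1 \<and> e1 \<bullet> e2 = 0"

lemma orthon_cross_unit:
  assumes "orthon e1 e2" shows "(e1 \<times> e2) \<bullet> (e1 \<times> e2) = 1"
proof -
  have "(norm (e1 \<times> e2))\<^sup>2 = 1"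
    using assms norm_cross[of e1 e2] by (simp add: orthon_def power2_norm_eq_inner)
  then show ?thesis by (simp add: power2_norm_eq_inner)
qed

lemma orthon_expand:
  assumes "orthon e1 e2"
  shows "y = (y \<bullet> e1) *\<^sub>R e1 + (y \<bullet> e2) *\<^sub>R e2 + (y \<bullet> (e1 \<times> e2)) *\<^sub>R (e1 \<times> e2)"
proof -
  define n where "n = e1 \<times> e2"
  define z where "z = y - (y \<bullet> e1) *\<^sub>R e1 - (y \<bullet> e2) *\<^sub>R e2"
  have o: "e1 \<bullet> e1 = 1" "e2 \<bullet> e2 = 1" "e1 \<bullet> e2 = 0" using assms by (auto simp: orthon_def)
  have nn: "n \<bullet> n = 1" using orthon_cross_unit[OF assms] by (simp add: n_def)
  have o': "e2 \<bullet> e1 = 0" using o by (simp add: inner_commute)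
  have z1: "z \<bullet> e1 = 0" and z2: "z \<bullet> e2 = 0"
    using o o' by (auto simp: z_def inner_diff_left)
  have "z \<times> n = (z \<bullet> e2) *\<^sub>R e1 - (z \<bullet> e1) *\<^sub>R e2"
    unfolding n_def by (simp add: Lagrange)
  then have zn: "z \<times> n = 0" using z1 z2 by simp
  have "n \<times> (z \<times> n) = (n \<bullet> n) *\<^sub>R z - (n \<bullet> z) *\<^sub>R n"
    by (simp add: Lagrange)
  with zn nn have "z = (n \<bullet> z) *\<^sub>R n" by simp
  moreover have "n \<bullet> z = y \<bullet> n"
    by (simp add: z_def n_def inner_diff_right dot_cross_self inner_commute)
  ultimately show ?thesis unfolding z_def n_def[symmetric]
    by (metis (no_types, lifting) add.commute diff_diff_eq diff_eq_eq)
qed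

lemma range_pmap:
  assumes "orthon e1 e2"
  shows "range (pmap p e1 e2) = {x. (e1 \<times> e2) \<bullet> (x - p) = 0}"
proof (intro set_eqI iffI)
  fix x assume "x \<in> range (pmap p e1 e2)"
  then obtain z where "x = pmap p e1 e2 z" by auto
  then show "x \<in> {x. (e1 \<times> e2) \<bullet> (x - p) = 0}"
    by (simp add: pmap_def inner_add_right dot_cross_self)
next
  fix x assume x: "x \<in> {x. (e1 \<times> e2) \<bullet> (x - p) = 0}"
  define z :: "real^2" where "z = vector [(x - p) \<bullet> e1, (x - p) \<bullet> e2]"
  have "pmap p e1 e2 z = p + ((x - p) \<bullet> e1) *\<^sub>R e1 + ((x - p) \<bullet> e2) *\<^sub>R e2"
    by (simp add: pmap_def z_def)
  also have "\<dots> = p + (x - p)"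
  proof -
    have h: "x - p = ((x - p) \<bullet> e1) *\<^sub>R e1 + ((x - p) \<bullet> e2) *\<^sub>R e2"
      using orthon_expand[OF assms, of "x - p"] x by (simp add: inner_commute)
    show ?thesis by (subst (2) h) (simp add: add.assoc)
  qed
  finally show "x \<in> range (pmap p e1 e2)" by (metis add.commute diff_add_cancel rangeI)
qed

lemma frame_exists:
  fixes n :: pt3
  assumes "n \<bullet> n = 1"
  shows "\<exists>e1 e2. orthon e1 e2 \<and> e1 \<times> e2 = n"
proof -
  have "\<exists>a::pt3. n \<times> a \<noteq> 0"
  proof (rule ccontr)
    assume "\<not> ?thesis"
    then have "n \<times> axis 1 1 = 0" "n \<times> axis 2 1 = 0" "n \<times> axis 3 1 = 0" by auto
    then have "n = 0" by (simp add: cross3_simps axis_def forall_3)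
    with assms show False by simp
  qed
  then obtain a where a: "n \<times> a \<noteq> 0" by blast
  define e1 where "e1 = (1 / norm (n \<times> a)) *\<^sub>R (n \<times> a)"
  define e2 where "e2 = n \<times> e1"
  have n1: "e1 \<bullet> e1 = 1" using a
    by (simp add: e1_def power2_norm_eq_inner[symmetric] power2_eq_square)
  have ne1: "n \<bullet> e1 = 0" by (simp add: e1_def dot_cross_self)
  have n2: "e2 \<bullet> e2 = 1"
  proof -
    have "(norm e2)\<^sup>2 = 1" using norm_cross[of n e1] n1 ne1 assms
      by (simp add: e2_def power2_norm_eq_inner)
    then show ?thesis by (simp add: power2_norm_eq_inner)
  qed
  have n3: "e1 \<bullet> e2 = 0" by (simp add: e2_def dot_cross_self)
  have "e1 \<times> e2 = (e1 \<bullet> e1) *\<^sub>R n - (e1 \<bullet> n) *\<^sub>R e1"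
    by (simp add: e2_def Lagrange)
  then have "e1 \<times> e2 = n" using n1 ne1 by (simp add: inner_commute)
  then show ?thesis using n1 n2 n3 by (auto simp: orthon_def)
qed

definition lmap :: "pt3 \<Rightarrow> pt3 \<Rightarrow> real^2 \<Rightarrow> pt3" where
  "lmap e1 e2 z = (z$1) *\<^sub>R e1 + (z$2) *\<^sub>R e2"

lemma pmap_lmap: "pmap p e1 e2 = (\<lambda>z. p + lmap e1 e2 z)"
  by (auto simp: pmap_def lmap_def add.assoc)

lemma linear_lmap: "linear (lmap e1 e2)"
  by (rule linearI) (auto simp: lmap_def algebra_simps)

lemma bounded_linear_lmap: "bounded_linear (lmap e1 e2)"
  using linear_lmap linear_conv_bounded_linear by blast

lemma norm2_sq: "(norm (z::real^2))\<^sup>2 = (z$1)\<^sup>2 + (z$2)\<^sup>2"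
proof -
  have "(norm z)\<^sup>2 = z \<bullet> z" by (rule power2_norm_eq_inner)
  also have "\<dots> = (z$1)\<^sup>2 + (z$2)\<^sup>2" by (simp add: inner_vec_def sum_2 power2_eq_square)
  finally show ?thesis .
qed

lemma norm_lmap:
  assumes "orthon e1 e2" shows "norm (lmap e1 e2 z) = norm z"
proof -
  have o: "e1 \<bullet> e1 = 1" "e2 \<bullet> e2 = 1" "e1 \<bullet> e2 = 0" "e2 \<bullet> e1 = 0"
    using assms by (auto simp: orthon_def inner_commute)
  have "(norm (lmap e1 e2 z))\<^sup>2 = lmap e1 e2 z \<bullet> lmap e1 e2 z" by (rule power2_norm_eq_inner)
  also have "\<dots> = (z$1)\<^sup>2 + (z$2)\<^sup>2"
    using o by (simp add: lmap_def inner_add_left inner_add_right power2_eq_square algebra_simps)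
  also have "\<dots> = (norm z)\<^sup>2" by (simp add: norm2_sq)
  finally have "(norm (lmap e1 e2 z))\<^sup>2 = (norm z)\<^sup>2" .
  then show ?thesis by (simp add: power2_eq_iff_nonneg)
qed

lemma inj_lmap: assumes "orthon e1 e2" shows "inj (lmap e1 e2)"
proof (rule injI)
  fix x y assume "lmap e1 e2 x = lmap e1 e2 y"
  then have "lmap e1 e2 (x - y) = 0" using linear_lmap[of e1 e2]
    by (simp add: linear_diff)
  moreover have "norm (x - y) = norm (lmap e1 e2 (x - y))" using norm_lmap[OF assms] by simp
  ultimately have "norm (x - y) = 0" by simp
  then show "x = y" by simp
qed

lemma inj_pmap: assumes "orthon e1 e2" shows "inj (pmap p e1 e2)"
  using inj_lmap[OF assms] unfolding pmap_lmap inj_def by auto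

lemma dist_pmap: assumes "orthon e1 e2"
  shows "dist (pmap p e1 e2 z) (pmap p e1 e2 w) = dist z w"
  using norm_lmap[OF assms, of "z - w"] linear_lmap[of e1 e2]
  by (simp add: pmap_lmap dist_norm linear_diff)

lemma continuous_pmap: "continuous_on S (pmap p e1 e2)"
  unfolding pmap_def by (intro continuous_intros)

lemma pmap_image_hull:
  "pmap p e1 e2 ` (convex hull S) = convex hull (pmap p e1 e2 ` S)"
proof -
  have "pmap p e1 e2 ` X = (+) p ` (lmap e1 e2 ` X)" for X
    by (auto simp: pmap_lmap image_image)
  then show ?thesis
    by (simp add: convex_hull_linear_image[OF linear_lmap] convex_hull_translation)
qed

lemma pmap_rel_interior:
  assumes "orthon e1 e2"
  shows "pmap p e1 e2 ` (rel_interior S) = rel_interior (pmap p e1 e2 ` S)"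
proof -
  have "pmap p e1 e2 ` X = (\<lambda>x. p + x) ` (lmap e1 e2 ` X)" for X
    by (auto simp: pmap_lmap image_image)
  then show ?thesis
    by (simp add: rel_interior_translation rel_interior_injective_linear_image[OF bounded_linear_lmap inj_lmap[OF assms]])
qed

lemma pmap_vimage_hull:
  assumes "orthon e1 e2" "S \<subseteq> range (pmap p e1 e2)"
  shows "pmap p e1 e2 -` (convex hull S) = convex hull (pmap p e1 e2 -` S)"
proof -
  have "S = pmap p e1 e2 ` (pmap p e1 e2 -` S)" using assms(2) by auto
  then have "pmap p e1 e2 -` (convex hull S) = pmap p e1 e2 -` (pmap p e1 e2 ` (convex hull (pmap p e1 e2 -` S)))"
    by (metis pmap_image_hull)
  also have "\<dots> = convex hull (pmap p e1 e2 -` S)"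
    by (rule inj_vimage_image_eq[OF inj_pmap[OF assms(1)]])
  finally show ?thesis .
qed

lemma cross_lmap:
  "lmap e1 e2 x \<times> lmap e1 e2 y = (x$1 * y$2 - x$2 * y$1) *\<^sub>R (e1 \<times> e2)"
proof -
  have sk: "e2 \<times> e1 = - (e1 \<times> e2)" by (rule cross_skew)
  show ?thesis
    by (simp add: lmap_def cross_add_left cross_add_right cross_mult_left cross_mult_right sk
        algebra_simps)
qed

lemma measure_pmap_triangle:
  assumes o: "orthon e1 e2"
    and abc: "a \<in> range (pmap p e1 e2)" "b \<in> range (pmap p e1 e2)" "c \<in> range (pmap p e1 e2)"
  shows "measure lebesgue (pmap p e1 e2 -` (convex hull {a,b,c})) = tri_area a b c"
proof -
  obtain A B C where ABC: "a = pmap p e1 e2 A" "b = pmap p e1 e2 B" "c = pmap p e1 e2 C"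
    using abc by auto
  have "pmap p e1 e2 -` {a,b,c} = {A,B,C}"
    using inj_pmap[OF o, of p] ABC by (auto simp: inj_eq)
  then have pre: "pmap p e1 e2 -` (convex hull {a,b,c}) = convex hull {A,B,C}"
    using pmap_vimage_hull[OF o, of "{a,b,c}" p] abc by simp
  have cpt: "compact (convex hull {A,B,C})" by (simp add: finite_imp_compact_convex_hull)
  have "measure lebesgue (convex hull {A,B,C}) = measure lborel (convex hull {A,B,C})"
    using cpt by (intro measure_completion) (auto dest: compact_imp_closed)
  also have "\<dots> = \<bar>(C $ 1 - A $ 1) * (B $ 2 - A $ 2) - (B $ 1 - A $ 1) * (C $ 2 - A $ 2)\<bar> / 2"
    by (rule content_triangle)
  also have "\<dots> = tri_area a b c"
  proof -
    have "b - a = lmap e1 e2 (B - A)" "c - a = lmap e1 e2 (C - A)"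
      using linear_lmap[of e1 e2] by (auto simp: ABC pmap_lmap linear_diff)
    then have "(b - a) \<times> (c - a) = ((B-A)$1 * (C-A)$2 - (B-A)$2 * (C-A)$1) *\<^sub>R (e1 \<times> e2)"
      by (simp add: cross_lmap)
    moreover have "norm (e1 \<times> e2) = 1"
      using orthon_cross_unit[OF o] by (simp add: norm_eq_1)
    ultimately have "norm ((b - a) \<times> (c - a)) = \<bar>(B-A)$1 * (C-A)$2 - (B-A)$2 * (C-A)$1\<bar>"
      by simp
    then show ?thesis unfolding tri_area_def by (simp add: abs_minus_commute algebra_simps)
  qed
  finally show ?thesis using pre by simp
qed


definition hullt :: "pt3 \<times> pt3 \<times> pt3 \<Rightarrow> pt3 set" where
  "hullt = (\<lambda>(a,b,c). convex hull {a,b,c})"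
definition areat :: "pt3 \<times> pt3 \<times> pt3 \<Rightarrow> real" where
  "areat = (\<lambda>(a,b,c). tri_area a b c)"
definition vertt :: "pt3 \<times> pt3 \<times> pt3 \<Rightarrow> pt3 set" where
  "vertt = (\<lambda>(a,b,c). {a,b,c})"
definition ncol :: "pt3 \<times> pt3 \<times> pt3 \<Rightarrow> bool" where
  "ncol = (\<lambda>(a,b,c). \<not> collinear {a,b,c})"
definition nrm :: "pt3 \<times> pt3 \<times> pt3 \<Rightarrow> pt3" where
  "nrm = (\<lambda>(a,b,c). (b - a) \<times> (c - a))"
definition pl :: "pt3 \<times> pt3 \<times> pt3 \<Rightarrow> pt3 set" where
  "pl = (\<lambda>(a,b,c). {x. ((b - a) \<times> (c - a)) \<bullet> (x - a) = 0})"

definition tri_ok :: "(pt3 \<times> pt3 \<times> pt3) set \<Rightarrow> bool" where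
  "tri_ok T \<longleftrightarrow> finite T \<and> (\<forall>t\<in>T. ncol t) \<and>
     (\<forall>t1\<in>T. \<forall>t2\<in>T. t1 \<noteq> t2 \<longrightarrow> rel_interior (hullt t1) \<inter> rel_interior (hullt t2) = {})"

lemma triangulates_iff:
  "triangulates T S \<longleftrightarrow> tri_ok T \<and> S = \<Union>(hullt ` T)"
proof -
  have h: "hullt t = convex hull {fst t, fst (snd t), snd (snd t)}" for t
    by (cases t) (auto simp: hullt_def)
  have "(\<Union>(a,b,c)\<in>T. convex hull {a,b,c}) = \<Union>(hullt ` T)"
    by (auto simp: hullt_def)
  moreover have "(\<forall>(a,b,c)\<in>T. \<not> collinear {a,b,c}) \<longleftrightarrow> (\<forall>t\<in>T. ncol t)"
    by (auto simp: ncol_def)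
  ultimately show ?thesis unfolding triangulates_def tri_ok_def h by auto
qed

lemma sum_areat: "(\<Sum>(a,b,c)\<in>T. tri_area a b c) = sum areat T"
  by (simp add: areat_def)

lemma ncol_nrm: "ncol t \<Longrightarrow> nrm t \<noteq> 0"
proof (cases t)
  case (fields a b c)
  assume "ncol t"
  then have "\<not> collinear {b, a, c}" by (simp add: fields ncol_def insert_commute)
  then have "\<not> collinear {0, b - a, c - a}" by (simp add: collinear_3)
  then show ?thesis by (simp add: fields nrm_def cross_eq_0)
qed

lemma areat_pos: "ncol t \<Longrightarrow> areat t > 0"
  using ncol_nrm[of t] by (cases t) (auto simp: areat_def tri_area_def nrm_def)

lemma areat_nonneg: "areat t \<ge> 0"
  by (cases t) (auto simp: areat_def tri_area_def)

lemma hullt_sub_pl: "hullt t \<subseteq> pl t"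
proof (cases t)
  case (fields a b c)
  have "convex {x. ((b - a) \<times> (c - a)) \<bullet> (x - a) = 0}"
  proof -
    have "{x. ((b - a) \<times> (c - a)) \<bullet> (x - a) = 0} = {x. ((b - a) \<times> (c - a)) \<bullet> x = ((b - a) \<times> (c - a)) \<bullet> a}"
      by (auto simp: inner_diff_right)
    then show ?thesis by (simp add: convex_hyperplane)
  qed
  moreover have "{a,b,c} \<subseteq> {x. ((b - a) \<times> (c - a)) \<bullet> (x - a) = 0}"
    by (auto simp: dot_cross_self)
  ultimately show ?thesis by (simp add: fields hullt_def pl_def hull_minimal)
qed

lemma vertt_sub_pl: "vertt t \<subseteq> pl t"
  using hullt_sub_pl[of t] hull_subset[of "vertt t" convex]
  by (cases t) (auto simp: hullt_def vertt_def)

lemma hullt_eq: "hullt t = convex hull (vertt t)"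
  by (cases t) (auto simp: hullt_def vertt_def)

lemma negl_other:
  assumes o: "orthon e1 e2" and nc: "ncol t" and nsub: "\<not> vertt t \<subseteq> range (pmap p e1 e2)"
  shows "negligible (pmap p e1 e2 -` hullt t)"
proof -
  obtain a b c where t: "t = (a,b,c)" by (cases t)
  define w where "w = nrm t"
  have w0: "w \<noteq> 0" using ncol_nrm[OF nc] by (simp add: w_def)
  define k :: "real^2" where "k = vector [w \<bullet> e1, w \<bullet> e2]"
  have sub: "pmap p e1 e2 -` hullt t \<subseteq> {z. k \<bullet> z = w \<bullet> (a - p)}"
  proof
    fix z assume "z \<in> pmap p e1 e2 -` hullt t"
    then have "pmap p e1 e2 z \<in> pl t" using hullt_sub_pl[of t] by auto
    then have "w \<bullet> (pmap p e1 e2 z - a) = 0" by (simp add: t pl_def w_def nrm_def)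
    moreover have "k \<bullet> z = z$1 * (w \<bullet> e1) + z$2 * (w \<bullet> e2)"
    proof -
      have "k \<bullet> z = k$1 * z$1 + k$2 * z$2" by (simp add: inner_vec_def sum_2)
      moreover have "k$1 = w \<bullet> e1" "k$2 = w \<bullet> e2" by (simp_all add: k_def)
      ultimately show ?thesis by (simp only: mult.commute)
    qed
    moreover have "w \<bullet> (a - p) = - (w \<bullet> (p - a))" by (simp add: inner_diff_right)
    moreover have "w \<bullet> (pmap p e1 e2 z - a) = w \<bullet> (p - a) + z$1 * (w \<bullet> e1) + z$2 * (w \<bullet> e2)"
      by (simp add: pmap_def inner_add_right inner_diff_right)
    ultimately show "z \<in> {z. k \<bullet> z = w \<bullet> (a - p)}"
      by (simp only: mem_Collect_eq)
  qed
  show ?thesis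
  proof (cases "k \<noteq> 0 \<or> w \<bullet> (a - p) \<noteq> 0")
    case True
    then show ?thesis using negligible_subset[OF negligible_hyperplane[OF True] sub] by blast
  next
    case False
    then have we: "w \<bullet> e1 = 0" "w \<bullet> e2 = 0" "w \<bullet> (a - p) = 0"
      by (auto simp: k_def vec_eq_iff forall_2)
    define n where "n = e1 \<times> e2"
    have ex: "w = (w \<bullet> e1) *\<^sub>R e1 + (w \<bullet> e2) *\<^sub>R e2 + (w \<bullet> n) *\<^sub>R n"
      unfolding n_def by (rule orthon_expand[OF o])
    have wn: "w = (w \<bullet> n) *\<^sub>R n"
    proof -
      have "w = 0 *\<^sub>R e1 + 0 *\<^sub>R e2 + (w \<bullet> n) *\<^sub>R n"
        using ex by (simp only: we(1) we(2))
      then show ?thesis by (metis add_0 scale_zero_left)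
    qed
    have wn0: "w \<bullet> n \<noteq> 0"
    proof
      assume "w \<bullet> n = 0"
      then have "w = 0 *\<^sub>R n" by (subst wn) simp
      then show False using w0 by simp
    qed
    have "vertt t \<subseteq> range (pmap p e1 e2)"
    proof
      fix x assume x: "x \<in> vertt t"
      then have "w \<bullet> (x - a) = 0" using vertt_sub_pl[of t] by (auto simp: t pl_def w_def nrm_def)
      moreover have "w \<bullet> (x - p) = w \<bullet> (x - a) + w \<bullet> (a - p)"
        by (simp add: inner_diff_right)
      ultimately have "w \<bullet> (x - p) = 0" using we(3) by simp
      then have "(w \<bullet> n) * (n \<bullet> (x - p)) = 0" by (subst (asm) wn) simp
      then have "n \<bullet> (x - p) = 0" using wn0 by simp
      then show "x \<in> range (pmap p e1 e2)" using range_pmap[OF o, of p] by (simp add: n_def)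
    qed
    with nsub show ?thesis by blast
  qed
qed

lemma compact_vimage_hullt:
  assumes o: "orthon e1 e2" and sub: "vertt t \<subseteq> range (pmap p e1 e2)"
  shows "pmap p e1 e2 -` hullt t = convex hull (pmap p e1 e2 -` vertt t)"
    and "compact (pmap p e1 e2 -` hullt t)"
proof -
  show eq: "pmap p e1 e2 -` hullt t = convex hull (pmap p e1 e2 -` vertt t)"
    using pmap_vimage_hull[OF o sub] by (simp add: hullt_eq)
  have "finite (pmap p e1 e2 -` vertt t)"
    by (rule finite_vimageI) (auto simp: vertt_def inj_pmap[OF o] split: prod.splits)
  then show "compact (pmap p e1 e2 -` hullt t)"
    by (simp add: eq finite_imp_compact_convex_hull)
qed

lemma measure_union_in:
  assumes o: "orthon e1 e2" and ok: "tri_ok T"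
    and sub: "\<And>t. t \<in> T \<Longrightarrow> vertt t \<subseteq> range (pmap p e1 e2)"
  shows "measure lebesgue (\<Union>t\<in>T. pmap p e1 e2 -` hullt t) = sum areat T"
proof -
  let ?f = "\<lambda>t. pmap p e1 e2 -` hullt t"
  have fin: "finite T" using ok by (simp add: tri_ok_def)
  have "measure lebesgue (\<Union>(?f ` T)) = (\<Sum>t\<in>T. measure lebesgue (?f t))"
  proof (rule measure_negligible_finite_Union_image[OF fin])
    show "?f t \<in> lmeasurable" if "t \<in> T" for t
      using compact_vimage_hullt[OF o sub[OF that]] lmeasurable_compact by blast
    show "pairwise (\<lambda>x y. negligible (?f x \<inter> ?f y)) T"
    unfolding pairwise_def
    proof (intro ballI impI)
      fix t1 t2 assume t: "t1 \<in> T" "t2 \<in> T" "t1 \<noteq> t2"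
      have cv: "convex (?f t1)" "convex (?f t2)"
        using compact_vimage_hullt(1)[OF o sub[OF t(1)]] compact_vimage_hullt(1)[OF o sub[OF t(2)]]
        by auto
      have cl: "closed (?f t1)" "closed (?f t2)"
        using compact_vimage_hullt(2)[OF o sub[OF t(1)]] compact_vimage_hullt(2)[OF o sub[OF t(2)]]
        by (auto intro: compact_imp_closed)
      have img: "pmap p e1 e2 ` ?f ti = hullt ti" if "ti \<in> T" for ti
        using sub[OF that] hullt_sub_pl[of ti]
      proof -
        have "hullt ti \<subseteq> range (pmap p e1 e2)"
        proof -
          have "convex (range (pmap p e1 e2))"
            using range_pmap[OF o, of p] convex_hyperplane[of "e1 \<times> e2" "(e1 \<times> e2) \<bullet> p"]
            by (simp add: inner_diff_right)
          then show ?thesis using sub[OF that] by (simp add: hullt_eq hull_minimal)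
        qed
        then show ?thesis by auto
      qed
      have ri: "pmap p e1 e2 ` interior (?f ti) \<subseteq> rel_interior (hullt ti)" if "ti \<in> T" for ti
        using pmap_rel_interior[OF o, of p "?f ti"] img[OF that] interior_subset_rel_interior
        by (metis image_mono)
      have disj: "rel_interior (hullt t1) \<inter> rel_interior (hullt t2) = {}"
        using ok t by (auto simp: tri_ok_def)
      have "?f t1 \<inter> ?f t2 \<subseteq> frontier (?f t1) \<union> frontier (?f t2)"
      proof
        fix x assume x: "x \<in> ?f t1 \<inter> ?f t2"
        have "x \<notin> interior (?f t1) \<or> x \<notin> interior (?f t2)"
          using ri[OF t(1)] ri[OF t(2)] disj by blast
        then show "x \<in> frontier (?f t1) \<union> frontier (?f t2)"
          using x cl by (auto simp: frontier_def closure_closed)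
      qed
      moreover have "negligible (frontier (?f t1) \<union> frontier (?f t2))"
        using negligible_convex_frontier cv by auto
      ultimately show "negligible (?f t1 \<inter> ?f t2)" by (rule negligible_subset[rotated])
    qed
  qed
  also have "\<dots> = sum areat T"
  proof (rule sum.cong[OF refl])
    fix t assume "t \<in> T"
    obtain a b c where t: "t = (a,b,c)" by (cases t)
    show "measure lebesgue (?f t) = areat t"
      using measure_pmap_triangle[OF o, of a p b c] sub[OF \<open>t \<in> T\<close>]
      by (simp add: t hullt_def areat_def vertt_def)
  qed
  finally show ?thesis by simp
qed

lemma measure_union_all:
  assumes o: "orthon e1 e2" and ok: "tri_ok T"
  shows "measure lebesgue (pmap p e1 e2 -` \<Union>(hullt ` T)) =
         sum areat {t\<in>T. vertt t \<subseteq> range (pmap p e1 e2)}"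
proof -
  let ?f = "\<lambda>t. pmap p e1 e2 -` hullt t"
  define Ti where "Ti = {t\<in>T. vertt t \<subseteq> range (pmap p e1 e2)}"
  define To where "To = {t\<in>T. \<not> vertt t \<subseteq> range (pmap p e1 e2)}"
  have fin: "finite T" using ok by (simp add: tri_ok_def)
  have okTi: "tri_ok Ti" using ok fin by (auto simp: tri_ok_def Ti_def)
  have eq: "pmap p e1 e2 -` \<Union>(hullt ` T) = (\<Union>t\<in>Ti. ?f t) \<union> (\<Union>t\<in>To. ?f t)"
    by (auto simp: Ti_def To_def)
  have neg: "negligible (\<Union>t\<in>To. ?f t)"
  proof (rule negligible_Union)
    show "finite (?f ` To)" using fin by (simp add: To_def)
    show "negligible S" if S: "S \<in> ?f ` To" for S
    proof -
      obtain t where "t \<in> To" "S = ?f t" using S by blast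
      then show ?thesis using negl_other[OF o, of t p] ok by (auto simp: To_def tri_ok_def)
    qed
  qed
  have mTi: "(\<Union>t\<in>Ti. ?f t) \<in> sets lebesgue"
  proof -
    have "finite Ti" using fin by (simp add: Ti_def)
    moreover have "compact (?f t)" if "t \<in> Ti" for t
      using compact_vimage_hullt(2)[OF o] that by (auto simp: Ti_def)
    ultimately have "compact (\<Union>t\<in>Ti. ?f t)" by blast
    then show ?thesis by (simp add: lmeasurable_compact fmeasurableD)
  qed
  have "measure lebesgue (pmap p e1 e2 -` \<Union>(hullt ` T)) = measure lebesgue (\<Union>t\<in>Ti. ?f t)"
    unfolding eq by (rule measure_Un_null_set[OF mTi]) (simp add: neg negligible_iff_null_sets[symmetric])
  also have "\<dots> = sum areat Ti"
    by (rule measure_union_in[OF o okTi]) (simp add: Ti_def)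
  finally show ?thesis by (simp add: Ti_def)
qed


definition isplane :: "pt3 set \<Rightarrow> bool" where
  "isplane HH \<longleftrightarrow> (\<exists>p e1 e2. orthon e1 e2 \<and> HH = range (pmap p e1 e2))"

definition frm :: "pt3 set \<Rightarrow> pt3 \<times> pt3 \<times> pt3" where
  "frm HH = (SOME f. orthon (fst (snd f)) (snd (snd f)) \<and> HH = range (pmap (fst f) (fst (snd f)) (snd (snd f))))"

definition lam :: "pt3 set \<Rightarrow> pt3 set \<Rightarrow> real" where
  "lam HH X = measure lebesgue (pmap (fst (frm HH)) (fst (snd (frm HH))) (snd (snd (frm HH))) -` X)"

definition Area :: "pt3 set \<Rightarrow> real" where
  "Area S = (\<Sum>HH\<in>{HH. isplane HH \<and> lam HH S \<noteq> 0}. lam HH S)"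

lemma frm:
  assumes "isplane HH"
  shows "orthon (fst (snd (frm HH))) (snd (snd (frm HH)))"
    "HH = range (pmap (fst (frm HH)) (fst (snd (frm HH))) (snd (snd (frm HH))))"
proof -
  obtain p e1 e2 where "orthon e1 e2" "HH = range (pmap p e1 e2)" using assms by (auto simp: isplane_def)
  then have ex: "\<exists>f. orthon (fst (snd f)) (snd (snd f)) \<and> HH = range (pmap (fst f) (fst (snd f)) (snd (snd f)))"
    by (intro exI[of _ "(p,e1,e2)"]) simp
  show "orthon (fst (snd (frm HH))) (snd (snd (frm HH)))"
    "HH = range (pmap (fst (frm HH)) (fst (snd (frm HH))) (snd (snd (frm HH))))"
    using someI_ex[OF ex] unfolding frm_def by auto
qed

lemma hyp_eq_aff:
  fixes n p :: pt3
  assumes n: "n \<noteq> 0" and abc: "{a,b,c} \<subseteq> {x. n \<bullet> (x - p) = 0}" and nc: "\<not> collinear {a,b,c}"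
  shows "{x. n \<bullet> (x - p) = 0} = affine hull {a,b,c}"
proof -
  have eq: "{x. n \<bullet> (x - p) = 0} = {x. n \<bullet> x = n \<bullet> p}" by (auto simp: inner_diff_right)
  have aff: "affine {x. n \<bullet> (x - p) = 0}" unfolding eq by (rule affine_hyperplane)
  have d: "aff_dim {x. n \<bullet> (x - p) = 0} = 2" unfolding eq using n by simp
  have sub: "affine hull {a,b,c} \<subseteq> {x. n \<bullet> (x - p) = 0}" using abc aff by (simp add: hull_minimal)
  have "aff_dim {a,b,c} \<le> int (card {a,b,c}) - 1" by (rule aff_dim_le_card) simp
  moreover have "card {a,b,c} \<le> 3" by (simp add: card_insert_le_m1)
  ultimately have le: "aff_dim {a,b,c} \<le> 2" by linarith
  have "aff_dim {a,b,c} > 1" using nc collinear_aff_dim[of "{a,b,c}"] by simp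
  with le have d3: "aff_dim {a,b,c} = 2" by arith
  then have d2: "aff_dim (affine hull {a,b,c}) = 2" by simp
  show ?thesis
    by (rule affine_dim_equal[OF affine_affine_hull aff _ sub, symmetric]) (auto simp: d d2 d3)
qed

lemma pl_aff: "ncol t \<Longrightarrow> pl t = affine hull (vertt t)"
proof -
  assume nc: "ncol t"
  obtain a b c where t: "t = (a,b,c)" by (cases t)
  show ?thesis
    using hyp_eq_aff[of "nrm t" a b c a] ncol_nrm[OF nc] vertt_sub_pl[of t] nc
    by (simp add: t pl_def nrm_def vertt_def ncol_def)
qed

lemma range_pmap_aff:
  assumes o: "orthon e1 e2" and nc: "ncol t" and sub: "vertt t \<subseteq> range (pmap p e1 e2)"
  shows "range (pmap p e1 e2) = affine hull (vertt t)"
proof -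
  obtain a b c where t: "t = (a,b,c)" by (cases t)
  have "e1 \<times> e2 \<noteq> 0" using orthon_cross_unit[OF o] by auto
  then show ?thesis
    using hyp_eq_aff[of "e1 \<times> e2" a b c p] sub nc range_pmap[OF o, of p]
    by (simp add: t vertt_def ncol_def)
qed

lemma pl_isplane: "ncol t \<Longrightarrow> isplane (pl t)"
proof -
  assume nc: "ncol t"
  obtain a b c where t: "t = (a,b,c)" by (cases t)
  define w where "w = nrm t"
  have w0: "w \<noteq> 0" using ncol_nrm[OF nc] by (simp add: w_def)
  define n where "n = (1 / norm w) *\<^sub>R w"
  have "n \<bullet> n = 1" using w0
    by (simp add: n_def power2_norm_eq_inner[symmetric] power2_eq_square)
  then obtain e1 e2 where o: "orthon e1 e2" and c: "e1 \<times> e2 = n" using frame_exists by blast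
  have "range (pmap a e1 e2) = {x. n \<bullet> (x - a) = 0}" using range_pmap[OF o] c by simp
  also have "\<dots> = pl t" using w0 by (auto simp: n_def t pl_def w_def nrm_def)
  finally show ?thesis using o unfolding isplane_def by metis
qed

lemma plane_unique:
  assumes P: "isplane HH" and nc: "ncol t" and sub: "vertt t \<subseteq> HH"
  shows "HH = pl t"
proof -
  obtain p e1 e2 where o: "orthon e1 e2" and Pi: "HH = range (pmap p e1 e2)"
    using P by (auto simp: isplane_def)
  show ?thesis using range_pmap_aff[OF o nc] sub Pi pl_aff[OF nc] by simp
qed

lemma lam_union:
  assumes ok: "tri_ok T" and P: "isplane HH"
  shows "lam HH (\<Union>(hullt ` T)) = sum areat {t\<in>T. vertt t \<subseteq> HH}"
  unfolding lam_def
  using measure_union_all[OF frm(1)[OF P] ok, of "fst (frm HH)"] frm(2)[OF P] by simp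

lemma Area_eq:
  assumes ok: "tri_ok T"
  shows "Area (\<Union>(hullt ` T)) = sum areat T"
proof -
  define S where "S = \<Union>(hullt ` T)"
  have fin: "finite T" using ok by (simp add: tri_ok_def)
  have nc: "\<And>t. t \<in> T \<Longrightarrow> ncol t" using ok by (simp add: tri_ok_def)
  have grp: "\<And>HH. HH \<in> pl ` T \<Longrightarrow> {t\<in>T. pl t = HH} = {t\<in>T. vertt t \<subseteq> HH}"
  proof -
    fix HH assume "HH \<in> pl ` T"
    then obtain t0 where t0: "t0 \<in> T" "HH = pl t0" by auto
    have "isplane HH" using pl_isplane[OF nc[OF t0(1)]] t0 by simp
    then show "{t\<in>T. pl t = HH} = {t\<in>T. vertt t \<subseteq> HH}"
      using vertt_sub_pl plane_unique nc by blast
  qed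
  have set_eq: "{HH. isplane HH \<and> lam HH S \<noteq> 0} = pl ` T"
  proof (intro set_eqI iffI)
    fix HH assume "HH \<in> {HH. isplane HH \<and> lam HH S \<noteq> 0}"
    then have P: "isplane HH" and l: "sum areat {t\<in>T. vertt t \<subseteq> HH} \<noteq> 0"
      using lam_union[OF ok] by (auto simp: S_def)
    then obtain t where "t \<in> T" "vertt t \<subseteq> HH"
      by (metis (mono_tags, lifting) empty_Collect_eq sum.empty)
    then show "HH \<in> pl ` T" using plane_unique[OF P nc] by blast
  next
    fix HH assume "HH \<in> pl ` T"
    then obtain t0 where t0: "t0 \<in> T" "HH = pl t0" by auto
    have P: "isplane HH" using pl_isplane[OF nc[OF t0(1)]] t0 by simp
    have "areat t0 \<le> sum areat {t\<in>T. vertt t \<subseteq> HH}"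
      by (rule member_le_sum) (use t0 vertt_sub_pl fin areat_nonneg in auto)
    then have "lam HH S > 0"
      using areat_pos[OF nc[OF t0(1)]] lam_union[OF ok P] by (simp add: S_def)
    then show "HH \<in> {HH. isplane HH \<and> lam HH S \<noteq> 0}" using P by simp
  qed
  have "sum areat T = (\<Sum>HH\<in>pl ` T. sum areat {t\<in>T. pl t = HH})"
    by (rule sum.image_gen[OF fin])
  also have "\<dots> = (\<Sum>HH\<in>pl ` T. lam HH S)"
  proof (rule sum.cong[OF refl])
    fix HH assume Pi: "HH \<in> pl ` T"
    then have "isplane HH" using pl_isplane nc by blast
    then show "sum areat {t\<in>T. pl t = HH} = lam HH S"
      using grp[OF Pi] lam_union[OF ok] by (simp add: S_def)
  qed
  finally show ?thesis using set_eq by (simp add: Area_def S_def)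
qed

lemma surface_area_eq:
  assumes "triangulates T (frontier P)"
  shows "surface_area P = sum areat T"
proof -
  have ok: "tri_ok T" and fr: "frontier P = \<Union>(hullt ` T)" using assms by (auto simp: triangulates_iff)
  show ?thesis unfolding surface_area_def
  proof (rule the_equality)
    show "\<exists>T'. triangulates T' (frontier P) \<and> sum areat T = (\<Sum>(a,b,c)\<in>T'. tri_area a b c)"
      using assms by (auto simp: sum_areat)
  next
    fix A assume "\<exists>T'. triangulates T' (frontier P) \<and> A = (\<Sum>(a,b,c)\<in>T'. tri_area a b c)"
    then obtain T' where T': "triangulates T' (frontier P)" "A = sum areat T'" by (auto simp: sum_areat)
    then have "A = Area (frontier P)" using Area_eq by (auto simp: triangulates_iff)
    also have "\<dots> = sum areat T" using Area_eq[OF ok] fr by simp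
    finally show "A = sum areat T" .
  qed
qed


lemma frontier_scale:
  fixes S :: "pt3 set"
  assumes "k \<noteq> 0"
  shows "frontier ((\<lambda>x. k *\<^sub>R x) ` S) = (\<lambda>x. k *\<^sub>R x) ` frontier S"
proof -
  have lin: "linear (\<lambda>x::pt3. k *\<^sub>R x)" by (simp add: linear_scaleR)
  have inj: "inj (\<lambda>x::pt3. k *\<^sub>R x)" using assms by (auto simp: inj_def)
  show ?thesis
    unfolding frontier_def
    by (simp add: closure_injective_linear_image[OF lin inj] interior_injective_linear_image[OF lin inj]
        image_set_diff[OF inj])
qed

definition sct :: "real \<Rightarrow> pt3 \<times> pt3 \<times> pt3 \<Rightarrow> pt3 \<times> pt3 \<times> pt3" where
  "sct k = (\<lambda>(a,b,c). (k *\<^sub>R a, k *\<^sub>R b, k *\<^sub>R c))"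

lemma hullt_sct: "hullt (sct k t) = (\<lambda>x. k *\<^sub>R x) ` hullt t"
  by (cases t) (simp add: sct_def hullt_def convex_hull_scaling[symmetric])

lemma ncol_sct: "k \<noteq> 0 \<Longrightarrow> ncol (sct k t) \<longleftrightarrow> ncol t"
proof (cases t)
  case (fields a b c)
  assume k: "k \<noteq> 0"
  have "collinear {k *\<^sub>R a, k *\<^sub>R b, k *\<^sub>R c} \<longleftrightarrow> collinear {0, k *\<^sub>R (a - b), k *\<^sub>R (c - b)}"
    by (simp add: collinear_3 scaleR_diff_right)
  also have "\<dots> \<longleftrightarrow> collinear {0, a - b, c - b}" using k by (simp add: collinear_scaleR_iff)
  also have "\<dots> \<longleftrightarrow> collinear {a,b,c}" by (simp add: collinear_3)
  finally show ?thesis by (simp add: fields sct_def ncol_def)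
qed

lemma areat_sct: "areat (sct k t) = k\<^sup>2 * areat t"
proof (cases t)
  case (fields a b c)
  have "(k *\<^sub>R b - k *\<^sub>R a) \<times> (k *\<^sub>R c - k *\<^sub>R a) = (k * k) *\<^sub>R ((b - a) \<times> (c - a))"
    by (simp add: scaleR_diff_right[symmetric] cross_mult_left cross_mult_right)
  then show ?thesis by (simp add: fields sct_def areat_def tri_area_def power2_eq_square)
qed

lemma inj_sct: "k \<noteq> 0 \<Longrightarrow> inj (sct k)"
  by (auto simp: inj_def sct_def)

lemma triangulates_scale:
  assumes k: "k \<noteq> 0" and T: "triangulates T S"
  shows "triangulates (sct k ` T) ((\<lambda>x. k *\<^sub>R x) ` S)"
proof -
  have ok: "tri_ok T" and S: "S = \<Union>(hullt ` T)" using T by (auto simp: triangulates_iff)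
  have inj: "inj (\<lambda>x::pt3. k *\<^sub>R x)" using k by (auto simp: inj_def)
  have "tri_ok (sct k ` T)"
    unfolding tri_ok_def
  proof (intro conjI ballI impI)
    show "finite (sct k ` T)" using ok by (simp add: tri_ok_def)
    show "ncol t" if "t \<in> sct k ` T" for t using that ok ncol_sct[OF k] by (auto simp: tri_ok_def)
    fix t1 t2 assume t: "t1 \<in> sct k ` T" "t2 \<in> sct k ` T" "t1 \<noteq> t2"
    then obtain s1 s2 where s: "s1 \<in> T" "s2 \<in> T" "t1 = sct k s1" "t2 = sct k s2" "s1 \<noteq> s2"
      by (metis imageE)
    have "rel_interior (hullt s1) \<inter> rel_interior (hullt s2) = {}" using ok s by (auto simp: tri_ok_def)
    then show "rel_interior (hullt t1) \<inter> rel_interior (hullt t2) = {}"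
      using s by (simp add: hullt_sct rel_interior_scaleR[OF k, symmetric] image_Int[OF inj, symmetric])
  qed
  moreover have "(\<lambda>x. k *\<^sub>R x) ` S = \<Union>(hullt ` sct k ` T)"
    by (auto simp: S hullt_sct)
  ultimately show ?thesis by (simp add: triangulates_iff)
qed

lemma surface_area_scale:
  assumes k: "k \<noteq> 0" and T: "triangulates T (frontier Q)"
  shows "surface_area ((\<lambda>x. k *\<^sub>R x) ` Q) = k\<^sup>2 * surface_area Q"
proof -
  have T': "triangulates (sct k ` T) (frontier ((\<lambda>x. k *\<^sub>R x) ` Q))"
    using triangulates_scale[OF k T] frontier_scale[OF k] by simp
  have "surface_area ((\<lambda>x. k *\<^sub>R x) ` Q) = sum areat (sct k ` T)" by (rule surface_area_eq[OF T'])
  also have "\<dots> = sum (areat \<circ> sct k) T"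
    using inj_sct[OF k] by (meson inj_on_subset subset_UNIV sum.reindex)
  also have "\<dots> = k\<^sup>2 * sum areat T" by (simp add: areat_sct sum_distrib_left)
  also have "\<dots> = k\<^sup>2 * surface_area Q" using surface_area_eq[OF T] by simp
  finally show ?thesis .
qed

lemma tri_area_cyc: "tri_area a b c = tri_area b c a"
proof -
  have "(c - b) \<times> (a - b) = (b - a) \<times> (c - a)"
    by (simp add: cross3_def vec_eq_iff forall_3 vector_3 algebra_simps)
  then show ?thesis by (simp add: tri_area_def)
qed

definition ob :: "pt3 \<Rightarrow> pt3 \<times> pt3 \<times> pt3 \<Rightarrow> pt3" where
  "ob v = (\<lambda>(a,b,c). if a = v then b else if b = v then c else a)"
definition oc :: "pt3 \<Rightarrow> pt3 \<times> pt3 \<times> pt3 \<Rightarrow> pt3" where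
  "oc v = (\<lambda>(a,b,c). if a = v then c else if b = v then a else b)"

lemma rot_props:
  assumes "v \<in> vertt t"
  shows "vertt t = {v, ob v t, oc v t}" "hullt t = convex hull {v, ob v t, oc v t}"
    "areat t = tri_area v (ob v t) (oc v t)"
    "ncol t \<longleftrightarrow> \<not> collinear {v, ob v t, oc v t}"
proof -
  obtain a b c where t: "t = (a,b,c)" by (cases t)
  show 1: "vertt t = {v, ob v t, oc v t}" using assms by (auto simp: t vertt_def ob_def oc_def)
  show "hullt t = convex hull {v, ob v t, oc v t}" using 1 by (simp add: hullt_eq)
  show "ncol t \<longleftrightarrow> \<not> collinear {v, ob v t, oc v t}" using 1 by (simp add: t ncol_def vertt_def)
  show "areat t = tri_area v (ob v t) (oc v t)"
    using assms tri_area_cyc[of a b c] tri_area_cyc[of b c a]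
    by (auto simp: t areat_def ob_def oc_def vertt_def)
qed


lemma in_hull3I:
  "0 \<le> x \<Longrightarrow> 0 \<le> y \<Longrightarrow> 0 \<le> z \<Longrightarrow> x + y + z = 1 \<Longrightarrow> p = x *\<^sub>R a + y *\<^sub>R b + z *\<^sub>R c
   \<Longrightarrow> p \<in> convex hull {a,b,c}"
  by (auto simp: convex_hull_3)

lemma comb3:
  fixes v B C :: pt3
  shows "la *\<^sub>R (v + s1 *\<^sub>R B + s2 *\<^sub>R C) + lb *\<^sub>R (v + s3 *\<^sub>R B + s4 *\<^sub>R C) + lc *\<^sub>R (v + s5 *\<^sub>R B + s6 *\<^sub>R C)
     = (la + lb + lc) *\<^sub>R v + (la * s1 + lb * s3 + lc * s5) *\<^sub>R B + (la * s2 + lb * s4 + lc * s6) *\<^sub>R C"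
  by (simp add: algebra_simps)

lemma in_hull3_coef:
  fixes v B C :: pt3
  assumes "0 \<le> la" "0 \<le> lb" "0 \<le> lc" "la + lb + lc = 1"
    "la * s1 + lb * s3 + lc * s5 = \<beta>" "la * s2 + lb * s4 + lc * s6 = \<gamma>"
  shows "v + \<beta> *\<^sub>R B + \<gamma> *\<^sub>R C \<in>
     convex hull {v + s1 *\<^sub>R B + s2 *\<^sub>R C, v + s3 *\<^sub>R B + s4 *\<^sub>R C, v + s5 *\<^sub>R B + s6 *\<^sub>R C}"
  by (rule in_hull3I[OF assms(1-4)]) (simp add: comb3 assms)

lemma split_tri:
  fixes v B C :: pt3
  assumes s: "0 < s" "s < 1" "0 < s'" "s' < 1"
    and bg: "0 \<le> \<beta>" "0 \<le> \<gamma>" "\<beta> + \<gamma> \<le> 1" and ge: "\<beta> / s + \<gamma> / s' \<ge> 1"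
  shows "v + \<beta> *\<^sub>R B + \<gamma> *\<^sub>R C \<in> convex hull {v + s *\<^sub>R B + 0 *\<^sub>R C, v + 1 *\<^sub>R B + 0 *\<^sub>R C, v + 0 *\<^sub>R B + 1 *\<^sub>R C}
     \<union> convex hull {v + s *\<^sub>R B + 0 *\<^sub>R C, v + 0 *\<^sub>R B + 1 *\<^sub>R C, v + 0 *\<^sub>R B + s' *\<^sub>R C}"
proof (cases "\<beta> / s + \<gamma> \<ge> 1")
  case True
  have d: "1 - s \<noteq> 0" "1 - s > 0" using s by auto
  have n: "\<beta> - s * (1 - \<gamma>) \<ge> 0" using True s by (simp add: field_simps)
  define la where "la = (1 - \<gamma> - \<beta>) / (1 - s)"
  define lb where "lb = (\<beta> - s * (1 - \<gamma>)) / (1 - s)"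
  have "la + lb = ((1 - \<gamma> - \<beta>) + (\<beta> - s * (1 - \<gamma>))) / (1 - s)"
    by (simp only: la_def lb_def add_divide_distrib)
  also have "\<dots> = (1 - \<gamma>) * (1 - s) / (1 - s)" by (simp add: algebra_simps)
  also have "\<dots> = 1 - \<gamma>" using d by simp
  finally have e1: "la + lb + \<gamma> = 1" by simp
  have "la * s + lb = ((1 - \<gamma> - \<beta>) * s + (\<beta> - s * (1 - \<gamma>))) / (1 - s)"
    by (simp only: la_def lb_def add_divide_distrib times_divide_eq_left)
  also have "\<dots> = \<beta> * (1 - s) / (1 - s)" by (simp add: algebra_simps)
  also have "\<dots> = \<beta>" using d by simp
  finally have e2: "la * s + lb * 1 + \<gamma> * 0 = \<beta>" by simp
  have p: "0 \<le> la" "0 \<le> lb" using d bg n by (auto simp: la_def lb_def)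
  have "v + \<beta> *\<^sub>R B + \<gamma> *\<^sub>R C \<in> convex hull {v + s *\<^sub>R B + 0 *\<^sub>R C, v + 1 *\<^sub>R B + 0 *\<^sub>R C, v + 0 *\<^sub>R B + 1 *\<^sub>R C}"
    by (rule in_hull3_coef[OF p bg(2) e1 e2]) simp
  then show ?thesis by blast
next
  case False
  define q where "q = \<beta> / s"
  have d: "1 - s' \<noteq> 0" "1 - s' > 0" using s by auto
  have m2: "\<gamma> - s' * (1 - q) \<ge> 0" using ge s unfolding q_def by (simp add: field_simps)
  have m3: "1 - q - \<gamma> \<ge> 0" using False by (simp add: q_def)
  define lb where "lb = (\<gamma> - s' * (1 - q)) / (1 - s')"
  define lc where "lc = (1 - q - \<gamma>) / (1 - s')"
  have "lb + lc = ((\<gamma> - s' * (1 - q)) + (1 - q - \<gamma>)) / (1 - s')"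
    by (simp only: lc_def lb_def add_divide_distrib)
  also have "\<dots> = (1 - q) * (1 - s') / (1 - s')" by (simp add: algebra_simps)
  also have "\<dots> = 1 - q" using d by simp
  finally have e1: "q + lb + lc = 1" by simp
  have e2: "q * s + lb * 0 + lc * 0 = \<beta>" using s by (simp add: q_def)
  have "lb + lc * s' = ((\<gamma> - s' * (1 - q)) + (1 - q - \<gamma>) * s') / (1 - s')"
    by (simp only: lc_def lb_def add_divide_distrib times_divide_eq_left)
  also have "\<dots> = \<gamma> * (1 - s') / (1 - s')" by (simp add: algebra_simps)
  also have "\<dots> = \<gamma>" using d by simp
  finally have e3: "q * 0 + lb * 1 + lc * s' = \<gamma>" by simp
  have p: "0 \<le> q" "0 \<le> lb" "0 \<le> lc" using d bg m2 m3 s by (auto simp: lc_def lb_def q_def)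
  have "v + \<beta> *\<^sub>R B + \<gamma> *\<^sub>R C \<in> convex hull {v + s *\<^sub>R B + 0 *\<^sub>R C, v + 0 *\<^sub>R B + 1 *\<^sub>R C, v + 0 *\<^sub>R B + s' *\<^sub>R C}"
    by (rule in_hull3_coef[OF p e1 e2 e3])
  then show ?thesis by blast
qed

lemma low_tri:
  fixes v B C :: pt3
  assumes s: "0 < s" "0 < s'"
    and bg: "0 \<le> \<beta>" "0 \<le> \<gamma>" and le: "\<beta> / s + \<gamma> / s' \<le> 1"
  shows "v + \<beta> *\<^sub>R B + \<gamma> *\<^sub>R C \<in> convex hull {v + 0 *\<^sub>R B + 0 *\<^sub>R C, v + s *\<^sub>R B + 0 *\<^sub>R C, v + 0 *\<^sub>R B + s' *\<^sub>R C}"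
  using s bg le
  by (intro in_hull3_coef[where la = "1 - \<beta> / s - \<gamma> / s'" and lb = "\<beta> / s" and lc = "\<gamma> / s'"])
     (auto simp: field_simps)

lemma mid_seg:
  fixes v B C :: pt3
  assumes s: "0 < s" "0 < s'"
    and bg: "0 \<le> \<beta>" "0 \<le> \<gamma>" and eq: "\<beta> / s + \<gamma> / s' = 1"
  shows "v + \<beta> *\<^sub>R B + \<gamma> *\<^sub>R C \<in> closed_segment (v + s *\<^sub>R B) (v + s' *\<^sub>R C)"
proof -
  have "\<beta> / s \<ge> 0" using bg s by simp
  then have g: "\<gamma> / s' \<le> 1" "0 \<le> \<gamma> / s'" using eq bg s by (linarith, simp)
  have b: "1 - \<gamma> / s' = \<beta> / s" using eq by simp
  have "(1 - \<gamma> / s') *\<^sub>R (v + s *\<^sub>R B) + (\<gamma> / s') *\<^sub>R (v + s' *\<^sub>R C)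
     = ((1 - \<gamma> / s') + \<gamma> / s') *\<^sub>R v + ((1 - \<gamma> / s') * s) *\<^sub>R B + ((\<gamma> / s') * s') *\<^sub>R C"
    by (simp add: algebra_simps)
  also have "\<dots> = v + \<beta> *\<^sub>R B + \<gamma> *\<^sub>R C" unfolding b using s by (simp add: eq)
  finally have "v + \<beta> *\<^sub>R B + \<gamma> *\<^sub>R C = (1 - \<gamma> / s') *\<^sub>R (v + s *\<^sub>R B) + (\<gamma> / s') *\<^sub>R (v + s' *\<^sub>R C)"
    by simp
  then show ?thesis using g unfolding in_segment by blast
qed

locale vtx =
  fixes P :: "pt3 set" and v u :: pt3 and r :: real and T :: "(pt3 \<times> pt3 \<times> pt3) set"
  assumes compP: "compact P" and clint: "closure (interior P) = P"
    and triT: "triangulates T (frontier P)"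
    and vP: "v \<in> P" and u1: "norm u = 1" and rpos: "r > 0"
    and cvx: "convex (P \<inter> cball v r)"
    and pos: "\<And>x. x \<in> P \<inter> cball v r \<Longrightarrow> x \<noteq> v \<Longrightarrow> inner (x - v) u > 0"
begin

lemma okT: "tri_ok T" and frT: "frontier P = \<Union>(hullt ` T)"
  using triT by (auto simp: triangulates_iff)

lemma closedP: "closed P" using compP compact_imp_closed by blast

lemma frontier_sub: "frontier P \<subseteq> P"
  using closedP by (simp add: frontier_subset_closed)

lemma uu: "u \<bullet> u = 1" using u1 by (simp add: norm_eq_1)

lemma dirpos:
  assumes X: "convex X" "X \<subseteq> P" "v \<in> X" and a: "a \<in> X" "a \<noteq> v"
  shows "(a - v) \<bullet> u > 0"
proof -
  define e where "e = min 1 (r / norm (a - v))"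
  have na: "norm (a - v) > 0" using a by simp
  have e: "0 < e" "e \<le> 1" "e * norm (a - v) \<le> r"
    using na rpos by (auto simp: e_def min_def field_simps)
  define a' where "a' = (1 - e) *\<^sub>R v + e *\<^sub>R a"
  have "a' \<in> X" using X(1) X(3) a(1) e by (simp add: a'_def convexD)
  moreover have a'v: "a' - v = e *\<^sub>R (a - v)" by (simp add: a'_def algebra_simps)
  then have "norm (a' - v) \<le> r" using e by simp
  ultimately have "a' \<in> P \<inter> cball v r" using X(2) by (auto simp: dist_norm norm_minus_commute)
  moreover have "a' \<noteq> v" using a'v e a by auto
  ultimately have "(a' - v) \<bullet> u > 0" using pos by blast
  then show ?thesis using a'v e by (simp add: zero_less_mult_iff)
qed

lemma extreme_v:
  assumes X: "convex X" "X \<subseteq> P" "v \<in> X"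
  shows "v extreme_point_of X"
  unfolding extreme_point_of_def
proof (intro conjI ballI notI)
  show "v \<in> X" by fact
  fix a b assume ab: "a \<in> X" "b \<in> X" "v \<in> open_segment a b"
  then obtain m where m: "0 < m" "m < 1" "v = (1 - m) *\<^sub>R a + m *\<^sub>R b" and "a \<noteq> b"
    by (auto simp: in_segment)
  have av: "a \<noteq> v" "b \<noteq> v" using ab(3) by (auto simp: open_segment_def)
  have "(a - v) \<bullet> u > 0" "(b - v) \<bullet> u > 0" using dirpos[OF X] ab av by auto
  moreover have "(1 - m) *\<^sub>R (a - v) + m *\<^sub>R (b - v) = 0"
    using m(3) by (simp add: algebra_simps)
  then have "(1 - m) * ((a - v) \<bullet> u) + m * ((b - v) \<bullet> u) = 0"
    by (metis inner_add_left inner_scaleR_left inner_zero_left)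
  ultimately show False using m by (smt (verit) mult_pos_pos)
qed

lemma v_frontier: "v \<in> frontier P"
proof -
  have "v \<notin> interior P"
  proof
    assume "v \<in> interior P"
    then obtain e where e: "e > 0" "ball v e \<subseteq> P" by (meson open_contains_ball open_interior interior_subset subset_trans)
    define e' where "e' = min (e/2) r"
    define x where "x = v - e' *\<^sub>R u"
    have e': "0 < e'" "e' < e" "e' \<le> r" using e rpos by (auto simp: e'_def)
    have "norm (x - v) = e'" using e' u1 by (simp add: x_def)
    then have "x \<in> P \<inter> cball v r" using e e' by (auto simp: dist_norm norm_minus_commute intro!: subsetD[OF e(2)])
    moreover have "x \<noteq> v" using e' u1 by (auto simp: x_def)
    ultimately have "(x - v) \<bullet> u > 0" using pos by blast
    then show False using e' uu by (simp add: x_def)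
  qed
  then show ?thesis using vP closedP by (simp add: frontier_def closure_closed)
qed

definition Lat where "Lat = {t\<in>T. v \<in> hullt t}"

lemma finT: "finite T" using okT by (simp add: tri_ok_def)
lemma ncolT: "t \<in> T \<Longrightarrow> ncol t" using okT by (simp add: tri_ok_def)
lemma hullt_P: "t \<in> T \<Longrightarrow> hullt t \<subseteq> P" using frT frontier_sub by auto

lemma Lat_vert: "t \<in> Lat \<Longrightarrow> v \<in> vertt t"
proof -
  assume t: "t \<in> Lat"
  then have "v extreme_point_of hullt t"
    using extreme_v[of "hullt t"] hullt_P by (auto simp: Lat_def hullt_eq)
  then show ?thesis by (simp add: hullt_eq extreme_point_of_convex_hull)
qed

lemma Lat_ne: "Lat \<noteq> {}"
  using v_frontier frT by (auto simp: Lat_def)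

lemma finLat: "finite Lat" using finT by (simp add: Lat_def)

abbreviation "bo t \<equiv> ob v t"
abbreviation "co t \<equiv> oc v t"

lemma Lat_props:
  assumes t: "t \<in> Lat"
  shows "hullt t = convex hull {v, bo t, co t}" "areat t = tri_area v (bo t) (co t)"
    "\<not> collinear {v, bo t, co t}" "bo t \<noteq> v" "co t \<noteq> v" "bo t \<noteq> co t"
    "(bo t - v) \<bullet> u > 0" "(co t - v) \<bullet> u > 0"
proof -
  have tT: "t \<in> T" using t by (simp add: Lat_def)
  note R = rot_props[OF Lat_vert[OF t]]
  show h: "hullt t = convex hull {v, bo t, co t}" by (rule R(2))
  show "areat t = tri_area v (bo t) (co t)" by (rule R(3))
  show nc: "\<not> collinear {v, bo t, co t}" using R(4) ncolT[OF tT] by simp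
  show "bo t \<noteq> v" "co t \<noteq> v" "bo t \<noteq> co t" using nc by (auto simp: collinear_2 insert_commute)
  have X: "convex (hullt t)" "hullt t \<subseteq> P" "v \<in> hullt t"
    using hullt_P[OF tT] t by (auto simp: Lat_def hullt_eq)
  show "(bo t - v) \<bullet> u > 0" "(co t - v) \<bullet> u > 0"
    using dirpos[OF X] \<open>bo t \<noteq> v\<close> \<open>co t \<noteq> v\<close> h by (auto simp: hull_inc)
qed


definition mm where "mm = Min ((\<lambda>t. min ((bo t - v) \<bullet> u) ((co t - v) \<bullet> u)) ` Lat)"
definition MM where "MM = Max ((\<lambda>t. max (norm (bo t - v)) (norm (co t - v))) ` Lat)"
definition KC where "KC = MM / mm"

lemma mm_pos: "mm > 0"
  using finLat Lat_ne Lat_props(7,8) by (auto simp: mm_def)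

lemma mm_le: "t \<in> Lat \<Longrightarrow> mm \<le> (bo t - v) \<bullet> u \<and> mm \<le> (co t - v) \<bullet> u"
  using finLat unfolding mm_def by (metis (no_types, lifting) Min_le finite_imageI image_eqI min.bounded_iff)

lemma MM_ge: "t \<in> Lat \<Longrightarrow> norm (bo t - v) \<le> MM \<and> norm (co t - v) \<le> MM"
  using finLat unfolding MM_def by (metis (no_types, lifting) Max_ge finite_imageI image_eqI max.bounded_iff)

lemma KC_nonneg: "KC \<ge> 0"
proof -
  obtain t where "t \<in> Lat" using Lat_ne by blast
  then have "MM \<ge> 0" using MM_ge[of t] by (meson norm_ge_zero order_trans)
  then show ?thesis using mm_pos by (simp add: KC_def)
qed

lemma lat_bound:
  assumes t: "t \<in> Lat" and y: "y \<in> hullt t"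
  shows "(y - v) \<bullet> u \<ge> 0" "norm (y - v) \<le> KC * ((y - v) \<bullet> u)"
proof -
  obtain a b c where abc: "0 \<le> a" "0 \<le> b" "0 \<le> c" "a + b + c = 1"
    and y': "y = a *\<^sub>R v + b *\<^sub>R bo t + c *\<^sub>R co t"
    using y Lat_props(1)[OF t] by (auto simp: convex_hull_3)
  have yv: "y - v = b *\<^sub>R (bo t - v) + c *\<^sub>R (co t - v)"
  proof -
    have "y - v = y - (a + b + c) *\<^sub>R v" using abc(4) by simp
    then show ?thesis by (simp add: y' algebra_simps)
  qed
  have inn: "(y - v) \<bullet> u = b * ((bo t - v) \<bullet> u) + c * ((co t - v) \<bullet> u)"
    by (simp add: yv inner_add_left)
  have ml: "mm \<le> (bo t - v) \<bullet> u" "mm \<le> (co t - v) \<bullet> u" using mm_le[OF t] by auto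
  have ge: "(y - v) \<bullet> u \<ge> (b + c) * mm"
    using inn ml abc by (simp add: distrib_right add_mono mult_left_mono)
  show "(y - v) \<bullet> u \<ge> 0" using ge mm_pos abc by (smt (verit) mult_nonneg_nonneg)
  have "norm (y - v) \<le> b * norm (bo t - v) + c * norm (co t - v)"
    using abc by (simp add: yv) (metis abs_of_nonneg norm_scaleR norm_triangle_le order_refl add_mono)
  also have "\<dots> \<le> (b + c) * MM"
    using MM_ge[OF t] abc by (simp add: distrib_right add_mono mult_left_mono)
  also have "\<dots> = KC * ((b + c) * mm)" using mm_pos by (simp add: KC_def)
  also have "\<dots> \<le> KC * ((y - v) \<bullet> u)" using ge KC_nonneg by (simp add: mult_left_mono)
  finally show "norm (y - v) \<le> KC * ((y - v) \<bullet> u)" .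
qed

definition DD where "DD = Min (insert r ((\<lambda>t. infdist v (hullt t)) ` (T - Lat)))"

lemma DD_pos: "DD > 0"
proof -
  have "infdist v (hullt t) > 0" if "t \<in> T - Lat" for t
  proof (rule infdist_pos_not_in_closed)
    show "closed (hullt t)" by (simp add: hullt_eq compact_imp_closed finite_imp_compact_convex_hull vertt_def split: prod.splits)
    show "hullt t \<noteq> {}" by (simp add: hullt_eq vertt_def split: prod.splits)
    show "v \<notin> hullt t" using that by (simp add: Lat_def)
  qed
  then show ?thesis using finT rpos by (auto simp: DD_def)
qed

lemma DD_le_r: "DD \<le> r" using finT by (simp add: DD_def)

lemma DD_far: "t \<in> T \<Longrightarrow> t \<notin> Lat \<Longrightarrow> x \<in> hullt t \<Longrightarrow> DD \<le> norm (x - v)"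
proof -
  assume t: "t \<in> T" "t \<notin> Lat" and x: "x \<in> hullt t"
  have "DD \<le> infdist v (hullt t)" using finT t by (simp add: DD_def)
  also have "\<dots> \<le> dist v x" using x by (rule infdist_le)
  finally show ?thesis by (simp add: dist_norm norm_minus_commute)
qed

definition rho where "rho = DD / 4"

lemma rho_pos: "rho > 0" using DD_pos by (simp add: rho_def)

lemma near_lat:
  assumes y: "y \<in> frontier P" and n: "norm (y - v) < DD"
  shows "\<exists>t\<in>Lat. y \<in> hullt t"
proof -
  obtain t where t: "t \<in> T" "y \<in> hullt t" using y frT by auto
  have "t \<in> Lat" using DD_far[OF t(1) _ t(2)] n by force
  then show ?thesis using t by blast
qed

lemma descent:
  assumes x: "x \<in> P" "norm (x - v) < rho"
  shows "\<exists>s. 0 \<le> s \<and> s \<le> (x - v) \<bullet> u \<and> (\<exists>t\<in>Lat. x - s *\<^sub>R u \<in> hullt t)"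
proof -
  define i where "i = (x - v) \<bullet> u"
  have xK: "x \<in> P \<inter> cball v r" using x DD_le_r rho_pos by (auto simp: rho_def dist_norm norm_minus_commute)
  have i0: "i \<ge> 0" using pos[OF xK] by (cases "x = v") (auto simp: i_def)
  have ile: "i \<le> norm (x - v)" using Cauchy_Schwarz_ineq2[of "x - v" u] u1 by (simp add: i_def)
  define z where "z = x - i *\<^sub>R u"
  show ?thesis
  proof (cases "z = v")
    case True
    then obtain t where "t \<in> Lat" "v \<in> hullt t" using v_frontier frT by (auto simp: Lat_def)
    then show ?thesis using True i0 unfolding z_def i_def by (intro exI[of _ "(x - v) \<bullet> u"]) auto
  next
    case False
    have zv: "(z - v) \<bullet> u = 0" using uu by (simp add: z_def i_def inner_diff_left)
    have nz: "norm (z - v) \<le> 2 * norm (x - v)"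
    proof -
      have "z - v = (x - v) - i *\<^sub>R u" by (simp add: z_def algebra_simps)
      then have "norm (z - v) \<le> norm (x - v) + norm (i *\<^sub>R u)"
        using norm_triangle_ineq4 by metis
      then show ?thesis using u1 i0 ile by simp
    qed
    have zP: "z \<notin> P"
    proof
      assume "z \<in> P"
      moreover have "norm (z - v) \<le> r" using nz x DD_le_r DD_pos by (simp add: rho_def)
      ultimately have "z \<in> P \<inter> cball v r" by (auto simp: dist_norm norm_minus_commute)
      then show False using pos False zv by fastforce
    qed
    have "closed_segment x z \<inter> frontier P \<noteq> {}"
      by (rule connected_Int_frontier) (use x zP in auto)
    then obtain y where y: "y \<in> closed_segment x z" "y \<in> frontier P" by blast
    then obtain m where m: "0 \<le> m" "m \<le> 1" "y = (1 - m) *\<^sub>R x + m *\<^sub>R z" by (auto simp: in_segment)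
    have yx: "y = x - (m * i) *\<^sub>R u" by (simp add: m(3) z_def algebra_simps)
    have si: "0 \<le> m * i" "m * i \<le> i" using m i0 by (auto simp: mult_left_le_one_le)
    have "norm (y - v) \<le> norm (x - v) + m * i"
    proof -
      have "y - v = (x - v) - (m * i) *\<^sub>R u" by (simp add: yx algebra_simps)
      then have "norm (y - v) \<le> norm (x - v) + norm ((m * i) *\<^sub>R u)"
        using norm_triangle_ineq4 by metis
      then show ?thesis using u1 si by simp
    qed
    then have "norm (y - v) < DD" using si ile x by (simp add: rho_def)
    then obtain t where "t \<in> Lat" "y \<in> hullt t" using near_lat y(2) by blast
    then show ?thesis using si yx by (auto simp: i_def)
  qed
qed

definition CC where "CC = KC + 1"

lemma CC_ge1: "CC \<ge> 1" using KC_nonneg by (simp add: CC_def)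

lemma near_bound:
  assumes x: "x \<in> P" "norm (x - v) < rho"
  shows "norm (x - v) \<le> CC * ((x - v) \<bullet> u)"
proof -
  obtain s t where s: "0 \<le> s" "s \<le> (x - v) \<bullet> u" and t: "t \<in> Lat" "x - s *\<^sub>R u \<in> hullt t"
    using descent[OF x] by blast
  define y where "y = x - s *\<^sub>R u"
  have iy: "(y - v) \<bullet> u = (x - v) \<bullet> u - s" using uu by (simp add: y_def inner_diff_left)
  have "norm (y - v) \<le> KC * ((y - v) \<bullet> u)" using lat_bound(2)[OF t(1)] t(2) by (simp add: y_def)
  also have "\<dots> \<le> KC * ((x - v) \<bullet> u)" using iy s KC_nonneg by (simp add: mult_left_mono)
  finally have ny: "norm (y - v) \<le> KC * ((x - v) \<bullet> u)" .
  have "x - v = (y - v) + s *\<^sub>R u" by (simp add: y_def algebra_simps)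
  then have "norm (x - v) \<le> norm (y - v) + norm (s *\<^sub>R u)"
    using norm_triangle_ineq by metis
  also have "\<dots> \<le> KC * ((x - v) \<bullet> u) + (x - v) \<bullet> u" using ny s u1 by simp
  finally show ?thesis by (simp add: CC_def algebra_simps)
qed


lemma dl_exists: "\<exists>d>0. \<forall>x\<in>P \<inter> cball v r. (x - v) \<bullet> u < d \<longrightarrow> norm (x - v) < rho"
proof -
  define F where "F = (P \<inter> cball v r) \<inter> {x. rho \<le> norm (x - v)}"
  show ?thesis
  proof (cases "F = {}")
    case True
    then show ?thesis by (intro exI[of _ 1]) (auto simp: F_def)
  next
    case False
    have "closed {x. rho \<le> norm (x - v)}"
      by (rule closed_Collect_le) (intro continuous_intros)+
    then have cF: "compact F"
      unfolding F_def by (intro compact_Int_closed compP closed_cball)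
    have "continuous_on F (\<lambda>x. (x - v) \<bullet> u)" by (intro continuous_intros)
    then obtain x0 where x0: "x0 \<in> F" "\<And>y. y \<in> F \<Longrightarrow> (x0 - v) \<bullet> u \<le> (y - v) \<bullet> u"
      using continuous_attains_inf[OF cF False] by blast
    have "x0 \<noteq> v" using x0(1) rho_pos by (auto simp: F_def)
    then have d: "(x0 - v) \<bullet> u > 0" using x0(1) pos by (auto simp: F_def)
    show ?thesis
    proof (intro exI[of _ "(x0 - v) \<bullet> u"] conjI d ballI impI)
      fix x assume "x \<in> P \<inter> cball v r" "(x - v) \<bullet> u < (x0 - v) \<bullet> u"
      then show "norm (x - v) < rho" using x0(2)[of x] by (force simp: F_def)
    qed
  qed
qed

definition dl where "dl = (SOME d. d > 0 \<and> (\<forall>x\<in>P \<inter> cball v r. (x - v) \<bullet> u < d \<longrightarrow> norm (x - v) < rho))"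

lemma dl: "dl > 0" "\<And>x. x \<in> P \<inter> cball v r \<Longrightarrow> (x - v) \<bullet> u < dl \<Longrightarrow> norm (x - v) < rho"
  using someI_ex[OF dl_exists] unfolding dl_def[symmetric] by auto

lemma int_pt_exists: "\<exists>p. p \<in> interior P \<and> norm (p - v) < rho"
proof -
  have "v \<in> closure (interior P)" using clint vP by simp
  then obtain p where "p \<in> interior P" "dist p v < rho" using rho_pos closure_approachable by blast
  then show ?thesis by (auto simp: dist_norm)
qed

definition pp where "pp = (SOME p. p \<in> interior P \<and> norm (p - v) < rho)"

lemma pp: "pp \<in> interior P" "norm (pp - v) < rho"
  using someI_ex[OF int_pt_exists] unfolding pp_def[symmetric] by auto

lemma pp_pos: "(pp - v) \<bullet> u > 0"
proof -
  have "pp \<noteq> v" using pp(1) v_frontier by (auto simp: frontier_def)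
  moreover have "pp \<in> P \<inter> cball v r" using pp interior_subset DD_le_r DD_pos
    by (auto simp: rho_def dist_norm norm_minus_commute)
  ultimately show ?thesis using pos by blast
qed

definition tg where "tg = Min {dl, mm / 2, rho / (2 * CC), (pp - v) \<bullet> u}"

lemma tg_pos: "tg > 0"
  using dl mm_pos rho_pos CC_ge1 pp_pos by (simp add: tg_def)

end

locale vtxt = vtx +
  fixes t :: real
  assumes t0: "0 < t" and ttg: "t < tg"
begin

lemma t_le: "t < dl" "t < mm / 2" "t < rho / (2 * CC)" "t < (pp - v) \<bullet> u"
  using ttg by (auto simp: tg_def)

lemma CCt: "CC * t < rho / 2" using t_le(3) CC_ge1 by (simp add: field_simps)

definition U where "U = {x. x \<in> ball v r \<and> (x - v) \<bullet> u < t}"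
definition Q where "Q = P - U"
definition Bs where "Bs = {x\<in>P. x \<in> ball v r \<and> (x - v) \<bullet> u = t}"

lemma Q_trunc: "truncate P v u r t = Q" by (simp add: truncate_def Q_def U_def)

lemma open_U: "open U"
proof -
  have "U = ball v r \<inter> {x. (x - v) \<bullet> u < t}" by (auto simp: U_def)
  moreover have "open {x. (x - v) \<bullet> u < t}"
    by (rule open_Collect_less) (intro continuous_intros)+
  ultimately show ?thesis by auto
qed

lemma closed_Q: "closed Q" using closedP open_U by (simp add: Q_def closed_Diff)

lemma cap_bound: "x \<in> P \<Longrightarrow> x \<in> U \<Longrightarrow> norm (x - v) < CC * t"
proof -
  assume x: "x \<in> P" "x \<in> U"
  then have xK: "x \<in> P \<inter> cball v r" by (auto simp: U_def dist_norm norm_minus_commute)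
  have it: "(x - v) \<bullet> u < t" using x by (simp add: U_def)
  then have "norm (x - v) < rho" using dl(2)[OF xK] t_le by simp
  then have "norm (x - v) \<le> CC * ((x - v) \<bullet> u)" using near_bound x by blast
  also have "\<dots> < CC * t" using it CC_ge1 by simp
  finally show ?thesis .
qed

lemma lat_small:
  assumes "\<tau> \<in> Lat" "y \<in> hullt \<tau>" "(y - v) \<bullet> u \<le> t"
  shows "norm (y - v) < rho / 2"
proof -
  have "norm (y - v) \<le> KC * ((y - v) \<bullet> u)" using lat_bound assms by blast
  also have "\<dots> \<le> KC * t" using assms(3) KC_nonneg by (simp add: mult_left_mono)
  also have "\<dots> < CC * t" using t0 by (simp add: CC_def)
  finally show ?thesis using CCt by simp
qed

lemma rho_r: "rho < r" using DD_le_r DD_pos rpos by (simp add: rho_def)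

lemma frontier_Q: "frontier Q = (frontier P - U) \<union> Bs"
proof (intro set_eqI iffI)
  fix x assume x: "x \<in> frontier Q"
  then have xQ: "x \<in> Q" using closed_Q by (simp add: frontier_def closure_closed)
  show "x \<in> (frontier P - U) \<union> Bs"
  proof (rule ccontr)
    assume nx: "x \<notin> (frontier P - U) \<union> Bs"
    have xP: "x \<in> P" "x \<notin> U" using xQ by (auto simp: Q_def)
    then have xi: "x \<in> interior P" using nx closedP by (auto simp: frontier_def closure_closed)
    define Ob where "Ob = interior P \<inter> ({y. (y - v) \<bullet> u > t} \<union> {y. norm (y - v) > r})"
    have oO: "open Ob"
    proof -
      have "open {y. (y - v) \<bullet> u > t}" by (rule open_Collect_less) (intro continuous_intros)+
      moreover have "open {y. norm (y - v) > r}" by (rule open_Collect_less) (intro continuous_intros)+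
      ultimately show ?thesis by (auto simp: Ob_def)
    qed
    have OQ: "Ob \<subseteq> Q" using interior_subset by (auto simp: Ob_def Q_def U_def dist_norm norm_minus_commute)
    have "x \<in> Ob"
    proof (cases "(x - v) \<bullet> u > t")
      case True then show ?thesis using xi by (simp add: Ob_def)
    next
      case False
      have "\<not> norm (x - v) < r"
      proof
        assume "norm (x - v) < r"
        then have "x \<in> ball v r" by (simp add: dist_norm norm_minus_commute)
        then have "(x - v) \<bullet> u = t" using xP False by (simp add: U_def)
        then show False using nx xP \<open>x \<in> ball v r\<close> by (simp add: Bs_def)
      qed
      moreover have "norm (x - v) \<noteq> r"
      proof
        assume nr: "norm (x - v) = r"
        then have "x \<in> P \<inter> cball v r" using xP by (simp add: dist_norm norm_minus_commute)
        moreover have "\<not> norm (x - v) < rho" using nr rho_r by simp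
        ultimately have "(x - v) \<bullet> u \<ge> dl" using dl(2) by force
        then show False using False t_le by simp
      qed
      ultimately show ?thesis using xi by (simp add: Ob_def)
    qed
    then have "x \<in> interior Q" using oO OQ interior_maximal by blast
    then show False using x by (simp add: frontier_def)
  qed
next
  fix x assume x: "x \<in> (frontier P - U) \<union> Bs"
  have xQ: "x \<in> Q" using x frontier_sub by (auto simp: Q_def Bs_def U_def)
  have "x \<notin> interior Q"
  proof (cases "x \<in> Bs")
    case False
    then have "x \<in> frontier P" using x by auto
    then have "x \<notin> interior P" by (simp add: frontier_def)
    moreover have "interior Q \<subseteq> interior P" by (simp add: Q_def interior_mono)
    ultimately show ?thesis by blast
  next
    case True
    have "x \<in> closure U"
      unfolding closure_approachable
    proof (intro allI impI)
      fix e :: real assume e: "e > 0"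
      have nx: "norm (x - v) < r" using True by (simp add: Bs_def dist_norm norm_minus_commute)
      define e' where "e' = min (e/2) ((r - norm (x - v)) / 2)"
      have e': "0 < e'" "e' < e" "norm (x - v) + e' < r" using e nx by (auto simp: e'_def min_def field_simps)
      define y where "y = x - e' *\<^sub>R u"
      have "norm (y - v) \<le> norm (x - v) + norm (e' *\<^sub>R u)"
      proof -
        have "y - v = (x - v) - e' *\<^sub>R u" by (simp add: y_def algebra_simps)
        then show ?thesis using norm_triangle_ineq4 by metis
      qed
      then have "y \<in> ball v r" using e' u1 by (simp add: dist_norm norm_minus_commute)
      moreover have "(y - v) \<bullet> u < t" using True e' uu by (simp add: y_def Bs_def inner_diff_left)
      moreover have "dist y x < e" using e' u1 by (simp add: y_def dist_norm)
      ultimately show "\<exists>y\<in>U. dist y x < e" by (auto simp: U_def)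
    qed
    moreover have "interior Q \<inter> U = {}" using interior_subset by (auto simp: Q_def)
    then have "interior Q \<inter> closure U = {}" by (simp add: open_Int_closure_eq_empty)
    ultimately show ?thesis by blast
  qed
  then show "x \<in> frontier Q" using xQ by (simp add: frontier_def closure_closed closed_Q)
qed


definition sb where "sb \<tau> = t / ((bo \<tau> - v) \<bullet> u)"
definition sc where "sc \<tau> = t / ((co \<tau> - v) \<bullet> u)"
definition b1 where "b1 \<tau> = v + sb \<tau> *\<^sub>R (bo \<tau> - v)"
definition c1 where "c1 \<tau> = v + sc \<tau> *\<^sub>R (co \<tau> - v)"

lemma s_props:
  assumes "\<tau> \<in> Lat"
  shows "0 < sb \<tau>" "sb \<tau> < 1" "0 < sc \<tau>" "sc \<tau> < 1"
    "(b1 \<tau> - v) \<bullet> u = t" "(c1 \<tau> - v) \<bullet> u = t"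
proof -
  have i: "(bo \<tau> - v) \<bullet> u > 0" "(co \<tau> - v) \<bullet> u > 0" using Lat_props assms by auto
  have m: "mm \<le> (bo \<tau> - v) \<bullet> u" "mm \<le> (co \<tau> - v) \<bullet> u" using mm_le assms by auto
  show "0 < sb \<tau>" "0 < sc \<tau>" using i t0 by (auto simp: sb_def sc_def)
  show "sb \<tau> < 1" "sc \<tau> < 1" using i m t_le(2) mm_pos by (auto simp: sb_def sc_def field_simps)
  show "(b1 \<tau> - v) \<bullet> u = t" "(c1 \<tau> - v) \<bullet> u = t" using i by (auto simp: b1_def c1_def sb_def sc_def)
qed

lemma lat_coords:
  assumes "\<tau> \<in> Lat" "y \<in> hullt \<tau>"
  obtains \<beta> \<gamma> where "0 \<le> \<beta>" "0 \<le> \<gamma>" "\<beta> + \<gamma> \<le> 1"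
    "y = v + \<beta> *\<^sub>R (bo \<tau> - v) + \<gamma> *\<^sub>R (co \<tau> - v)"
proof -
  obtain a b c where abc: "0 \<le> a" "0 \<le> b" "0 \<le> c" "a + b + c = 1"
    and y': "y = a *\<^sub>R v + b *\<^sub>R bo \<tau> + c *\<^sub>R co \<tau>"
    using assms Lat_props(1)[OF assms(1)] by (auto simp: convex_hull_3)
  have "y = v + b *\<^sub>R (bo \<tau> - v) + c *\<^sub>R (co \<tau> - v)"
  proof -
    have "y - v = y - (a + b + c) *\<^sub>R v" using abc(4) by simp
    then have "y - v = b *\<^sub>R (bo \<tau> - v) + c *\<^sub>R (co \<tau> - v)" by (simp add: y' algebra_simps)
    then show ?thesis by (simp add: algebra_simps)
  qed
  then show ?thesis using that abc by auto
qed

lemma coord_inner: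
  assumes "\<tau> \<in> Lat"
  shows "(v + \<beta> *\<^sub>R (bo \<tau> - v) + \<gamma> *\<^sub>R (co \<tau> - v) - v) \<bullet> u = t * (\<beta> / sb \<tau> + \<gamma> / sc \<tau>)"
proof -
  have i: "(bo \<tau> - v) \<bullet> u > 0" "(co \<tau> - v) \<bullet> u > 0" using Lat_props assms by auto
  have "(v + \<beta> *\<^sub>R (bo \<tau> - v) + \<gamma> *\<^sub>R (co \<tau> - v) - v) \<bullet> u
      = \<beta> * ((bo \<tau> - v) \<bullet> u) + \<gamma> * ((co \<tau> - v) \<bullet> u)"
    by (simp add: inner_add_left)
  moreover have "t * (\<beta> / sb \<tau> + \<gamma> / sc \<tau>) = \<beta> * ((bo \<tau> - v) \<bullet> u) + \<gamma> * ((co \<tau> - v) \<bullet> u)"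
    using i t0 by (simp add: sb_def sc_def field_simps)
  ultimately show ?thesis by simp
qed

lemma hull_coords:
  assumes "\<tau> \<in> Lat" "0 \<le> \<beta>" "0 \<le> \<gamma>" "\<beta> + \<gamma> \<le> 1"
  shows "v + \<beta> *\<^sub>R (bo \<tau> - v) + \<gamma> *\<^sub>R (co \<tau> - v) \<in> hullt \<tau>"
  unfolding Lat_props(1)[OF assms(1)]
  by (rule in_hull3I[of "1 - \<beta> - \<gamma>" \<beta> \<gamma>]) (use assms in \<open>auto simp: algebra_simps\<close>)

lemma piece_split:
  assumes \<tau>: "\<tau> \<in> Lat"
  shows "hullt \<tau> \<inter> {y. (y - v) \<bullet> u \<ge> t} =
     convex hull {b1 \<tau>, bo \<tau>, co \<tau>} \<union> convex hull {b1 \<tau>, co \<tau>, c1 \<tau>}"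
proof (intro set_eqI iffI)
  fix y assume y: "y \<in> hullt \<tau> \<inter> {y. (y - v) \<bullet> u \<ge> t}"
  then obtain \<beta> \<gamma> where bg: "0 \<le> \<beta>" "0 \<le> \<gamma>" "\<beta> + \<gamma> \<le> 1"
    and ye: "y = v + \<beta> *\<^sub>R (bo \<tau> - v) + \<gamma> *\<^sub>R (co \<tau> - v)"
    using lat_coords[OF \<tau>] by blast
  have "t * (\<beta> / sb \<tau> + \<gamma> / sc \<tau>) \<ge> t" using y coord_inner[OF \<tau>] ye by simp
  then have ge: "\<beta> / sb \<tau> + \<gamma> / sc \<tau> \<ge> 1" using t0 by simp
  note S = s_props[OF \<tau>]
  show "y \<in> convex hull {b1 \<tau>, bo \<tau>, co \<tau>} \<union> convex hull {b1 \<tau>, co \<tau>, c1 \<tau>}"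
    using split_tri[OF S(1-4) bg ge, of v "bo \<tau> - v" "co \<tau> - v"]
    by (simp add: ye b1_def c1_def)
next
  fix y assume y: "y \<in> convex hull {b1 \<tau>, bo \<tau>, co \<tau>} \<union> convex hull {b1 \<tau>, co \<tau>, c1 \<tau>}"
  note S = s_props[OF \<tau>]
  have cv: "convex (hullt \<tau> \<inter> {y. (y - v) \<bullet> u \<ge> t})"
  proof -
    have "convex {y. (y - v) \<bullet> u \<ge> t}"
    proof -
      have e: "(y - v) \<bullet> u = u \<bullet> y - u \<bullet> v" for y by (simp add: inner_diff_right inner_commute[of _ u])
      have "{y. (y - v) \<bullet> u \<ge> t} = {y. u \<bullet> y \<ge> t + u \<bullet> v}"
        unfolding e by auto
      then show ?thesis by (simp add: convex_halfspace_ge)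
    qed
    then show ?thesis by (simp add: hullt_eq convex_Int)
  qed
  have mem: "b1 \<tau> \<in> hullt \<tau>" "bo \<tau> \<in> hullt \<tau>" "co \<tau> \<in> hullt \<tau>" "c1 \<tau> \<in> hullt \<tau>"
    using hull_coords[OF \<tau>, of "sb \<tau>" 0] hull_coords[OF \<tau>, of 1 0] hull_coords[OF \<tau>, of 0 1]
      hull_coords[OF \<tau>, of 0 "sc \<tau>"] S
    by (auto simp: b1_def c1_def)
  have "(bo \<tau> - v) \<bullet> u \<ge> t" "(co \<tau> - v) \<bullet> u \<ge> t"
    using mm_le[OF \<tau>] t_le(2) mm_pos by auto
  then have s1: "{b1 \<tau>, bo \<tau>, co \<tau>} \<subseteq> hullt \<tau> \<inter> {y. (y - v) \<bullet> u \<ge> t}"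
    and s2: "{b1 \<tau>, co \<tau>, c1 \<tau>} \<subseteq> hullt \<tau> \<inter> {y. (y - v) \<bullet> u \<ge> t}"
    using mem S by auto
  have "convex hull {b1 \<tau>, bo \<tau>, co \<tau>} \<subseteq> hullt \<tau> \<inter> {y. (y - v) \<bullet> u \<ge> t}"
    "convex hull {b1 \<tau>, co \<tau>, c1 \<tau>} \<subseteq> hullt \<tau> \<inter> {y. (y - v) \<bullet> u \<ge> t}"
    by (rule hull_minimal[where S=convex, OF s1 cv], rule hull_minimal[where S=convex, OF s2 cv])
  then show "y \<in> hullt \<tau> \<inter> {y. (y - v) \<bullet> u \<ge> t}" using y by blast
qed

lemma low_part:
  assumes \<tau>: "\<tau> \<in> Lat" and y: "y \<in> hullt \<tau>" "(y - v) \<bullet> u \<le> t"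
  shows "y \<in> convex hull {v, b1 \<tau>, c1 \<tau>}"
proof -
  obtain \<beta> \<gamma> where bg: "0 \<le> \<beta>" "0 \<le> \<gamma>" "\<beta> + \<gamma> \<le> 1"
    and ye: "y = v + \<beta> *\<^sub>R (bo \<tau> - v) + \<gamma> *\<^sub>R (co \<tau> - v)"
    using lat_coords[OF \<tau> y(1)] by blast
  have "t * (\<beta> / sb \<tau> + \<gamma> / sc \<tau>) \<le> t" using y coord_inner[OF \<tau>] ye by simp
  then have le: "\<beta> / sb \<tau> + \<gamma> / sc \<tau> \<le> 1" using t0 by simp
  note S = s_props[OF \<tau>]
  show ?thesis
    using low_tri[OF S(1) S(3) bg(1,2) le, of v "bo \<tau> - v" "co \<tau> - v"]
    by (simp add: ye b1_def c1_def)
qed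

lemma mid_part:
  assumes \<tau>: "\<tau> \<in> Lat" and y: "y \<in> hullt \<tau>" "(y - v) \<bullet> u = t"
  shows "y \<in> closed_segment (b1 \<tau>) (c1 \<tau>)"
proof -
  obtain \<beta> \<gamma> where bg: "0 \<le> \<beta>" "0 \<le> \<gamma>" "\<beta> + \<gamma> \<le> 1"
    and ye: "y = v + \<beta> *\<^sub>R (bo \<tau> - v) + \<gamma> *\<^sub>R (co \<tau> - v)"
    using lat_coords[OF \<tau> y(1)] by blast
  have "t * (\<beta> / sb \<tau> + \<gamma> / sc \<tau>) = t" using y coord_inner[OF \<tau>] ye by simp
  then have eq: "\<beta> / sb \<tau> + \<gamma> / sc \<tau> = 1" using t0 by simp
  note S = s_props[OF \<tau>]
  show ?thesis
    using mid_seg[OF S(1) S(3) bg(1,2) eq, of v "bo \<tau> - v" "co \<tau> - v"]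
    by (simp add: ye b1_def c1_def)
qed

lemma fP_minus_U:
  "frontier P - U = \<Union>(hullt ` (T - Lat)) \<union> (\<Union>\<tau>\<in>Lat. hullt \<tau> \<inter> {y. (y - v) \<bullet> u \<ge> t})"
proof (intro set_eqI iffI)
  fix x assume x: "x \<in> frontier P - U"
  then obtain \<tau> where \<tau>: "\<tau> \<in> T" "x \<in> hullt \<tau>" using frT by auto
  show "x \<in> \<Union>(hullt ` (T - Lat)) \<union> (\<Union>\<tau>\<in>Lat. hullt \<tau> \<inter> {y. (y - v) \<bullet> u \<ge> t})"
  proof (cases "\<tau> \<in> Lat")
    case True
    have "\<not> (x - v) \<bullet> u < t"
    proof
      assume lt: "(x - v) \<bullet> u < t"
      then have "norm (x - v) < rho / 2" using lat_small[OF True \<tau>(2)] by simp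
      then have "x \<in> ball v r" using rho_r rho_pos by (simp add: dist_norm norm_minus_commute)
      then show False using x lt by (simp add: U_def)
    qed
    then show ?thesis using True \<tau> by auto
  next
    case False then show ?thesis using \<tau> by auto
  qed
next
  fix x assume x: "x \<in> \<Union>(hullt ` (T - Lat)) \<union> (\<Union>\<tau>\<in>Lat. hullt \<tau> \<inter> {y. (y - v) \<bullet> u \<ge> t})"
  have "\<exists>\<tau>\<in>T. x \<in> hullt \<tau> \<and> (\<tau> \<in> Lat \<longrightarrow> t \<le> (x - v) \<bullet> u)"
    using x unfolding Lat_def by blast
  then obtain \<tau> where \<tau>: "\<tau> \<in> T" "x \<in> hullt \<tau>" "\<tau> \<in> Lat \<Longrightarrow> t \<le> (x - v) \<bullet> u" by blast
  have xf: "x \<in> frontier P" using \<tau> frT by auto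
  have "x \<notin> U"
  proof
    assume xU: "x \<in> U"
    show False
    proof (cases "\<tau> \<in> Lat")
      case True
      then have "(x - v) \<bullet> u \<ge> t" using \<tau>(3) by blast
      then show False using xU by (simp add: U_def)
    next
      case False
      have "norm (x - v) < CC * t" using cap_bound xU xf frontier_sub by blast
      then have "norm (x - v) < DD" using CCt rho_pos by (simp add: rho_def)
      then show False using DD_far[OF \<tau>(1) False \<tau>(2)] by simp
    qed
  qed
  then show "x \<in> frontier P - U" using xf by simp
qed

end

lemma relint3:
  fixes a b c v G y :: pt3
  assumes nc: "\<not> collinear {a,b,c}" and y: "y \<in> rel_interior (convex hull {a,b,c})"
  shows "\<exists>wa wb wc. 0 < wa \<and> 0 < wb \<and> 0 < wc \<and> wa + wb + wc = 1 \<and>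
     (y - v) \<bullet> G = wa * ((a - v) \<bullet> G) + wb * ((b - v) \<bullet> G) + wc * ((c - v) \<bullet> G)"
proof -
  have d: "a \<noteq> b" "a \<noteq> c" "b \<noteq> c" using nc by (auto simp: collinear_2 insert_commute)
  have ind: "\<not> affine_dependent {a,b,c}" using nc affine_dependent_imp_collinear_3 by blast
  obtain w where w: "\<forall>x\<in>{a,b,c}. 0 < w x" "sum w {a,b,c} = 1" "(\<Sum>x\<in>{a,b,c}. w x *\<^sub>R x) = y"
    using y rel_interior_convex_hull_explicit[OF ind] by blast
  have s1: "w a + w b + w c = 1" using w(2) d by simp
  have ye: "y = w a *\<^sub>R a + w b *\<^sub>R b + w c *\<^sub>R c" using w(3) d by (simp add: add.assoc)
  have "y - v = w a *\<^sub>R (a - v) + w b *\<^sub>R (b - v) + w c *\<^sub>R (c - v)"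
  proof -
    have "y - v = y - (w a + w b + w c) *\<^sub>R v" using s1 by simp
    then show ?thesis by (simp add: ye algebra_simps)
  qed
  then have "(y - v) \<bullet> G = w a * ((a - v) \<bullet> G) + w b * ((b - v) \<bullet> G) + w c * ((c - v) \<bullet> G)"
    by (simp add: inner_add_left)
  then show ?thesis using w(1) s1 by (intro exI[of _ "w a"] exI[of _ "w b"] exI[of _ "w c"]) auto
qed

lemma relint_nonempty: "ncol t \<Longrightarrow> rel_interior (hullt t) \<noteq> {}"
  by (cases t) (auto simp: hullt_def rel_interior_eq_empty)

lemma nrm_ncol: "nrm t \<noteq> 0 \<Longrightarrow> ncol t"
proof (cases t)
  case (fields a b c)
  assume "nrm t \<noteq> 0"
  then have "\<not> collinear {0, b - a, c - a}" by (simp add: fields nrm_def cross_eq_0)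
  then have "\<not> collinear {b, a, c}" by (simp add: collinear_3)
  then show ?thesis by (simp add: fields ncol_def insert_commute)
qed

lemma mid_open_seg:
  fixes x w :: "'a::real_normed_vector"
  assumes "d \<noteq> 0" "w \<noteq> 0"
  shows "x \<in> open_segment (x - d *\<^sub>R w) (x + d *\<^sub>R w)"
proof -
  have "x - d *\<^sub>R w \<noteq> x + d *\<^sub>R w"
  proof
    assume "x - d *\<^sub>R w = x + d *\<^sub>R w"
    then have "d *\<^sub>R w + d *\<^sub>R w = 0" by (simp add: algebra_simps)
    then have "(2 * d) *\<^sub>R w = 0" by (metis mult_2 scaleR_add_left)
    then show False using assms by simp
  qed
  moreover have "x = (1 - 1/2) *\<^sub>R (x - d *\<^sub>R w) + (1/2) *\<^sub>R (x + d *\<^sub>R w)"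
  proof -
    have "(1/2::real) + 1/2 = 1" by simp
    then have "(1/2) *\<^sub>R x + (1/2) *\<^sub>R x = x" by (metis scaleR_add_left scaleR_one)
    then show ?thesis by (simp add: algebra_simps)
  qed
  ultimately show ?thesis unfolding in_segment by (intro conjI exI[of _ "1/2"]) auto
qed

context vtxt
begin

definition Hp where "Hp = {x. (x - v) \<bullet> u = t}"

lemma Bs_eq: "Bs = (P \<inter> cball v r) \<inter> Hp"
proof (intro set_eqI iffI)
  fix x assume "x \<in> Bs" then show "x \<in> (P \<inter> cball v r) \<inter> Hp" by (auto simp: Bs_def Hp_def)
next
  fix x assume x: "x \<in> (P \<inter> cball v r) \<inter> Hp"
  then have "norm (x - v) < rho" using dl(2)[of x] t_le(1) by (auto simp: Hp_def)
  then show "x \<in> Bs" using x rho_r by (auto simp: Bs_def Hp_def dist_norm norm_minus_commute)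
qed

lemma convex_Hp: "convex Hp"
proof -
  have e: "(y - v) \<bullet> u = u \<bullet> y - u \<bullet> v" for y by (simp add: inner_diff_right inner_commute[of _ u])
  have "Hp = {x. u \<bullet> x = t + u \<bullet> v}" unfolding Hp_def e by auto
  then show ?thesis by (simp add: convex_hyperplane)
qed

lemma Hp_eq: "Hp = {x. u \<bullet> x = t + u \<bullet> v}"
proof -
  have e: "(y - v) \<bullet> u = u \<bullet> y - u \<bullet> v" for y by (simp add: inner_diff_right inner_commute[of _ u])
  show ?thesis unfolding Hp_def e by auto
qed

lemma aff_dim_Hp: "aff_dim Hp = 2"
proof -
  have "u \<noteq> 0" using u1 by auto
  then show ?thesis unfolding Hp_eq by simp
qed

lemma closed_Hp: "closed Hp" unfolding Hp_eq by (simp add: closed_hyperplane)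

lemma convex_Bs: "convex Bs" unfolding Bs_eq using cvx convex_Hp by (simp add: convex_Int)

lemma compact_Bs: "compact Bs"
  unfolding Bs_eq by (intro compact_Int_closed compP closed_cball closed_Hp)

lemma Bs_small: "x \<in> Bs \<Longrightarrow> norm (x - v) < rho / 2"
proof -
  assume x: "x \<in> Bs"
  then have xK: "x \<in> P \<inter> cball v r" by (auto simp: Bs_eq)
  have xP: "x \<in> P" and it: "(x - v) \<bullet> u = t" using x by (auto simp: Bs_def)
  have n: "norm (x - v) < rho" using dl(2)[OF xK] it t_le(1) by simp
  have "norm (x - v) \<le> CC * ((x - v) \<bullet> u)" by (rule near_bound[OF xP n])
  then have "norm (x - v) \<le> CC * t" using it by simp
  then show ?thesis using CCt by simp
qed

definition prj where "prj y = y + (t - (y - v) \<bullet> u) *\<^sub>R u"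

lemma Bs_cover: "x \<in> Bs \<Longrightarrow> \<exists>\<tau>\<in>Lat. x \<in> prj ` (convex hull {v, b1 \<tau>, c1 \<tau>})"
proof -
  assume x: "x \<in> Bs"
  have n: "norm (x - v) < rho" using Bs_small[OF x] rho_pos by simp
  obtain s \<tau> where s: "0 \<le> s" "s \<le> (x - v) \<bullet> u" and \<tau>: "\<tau> \<in> Lat" "x - s *\<^sub>R u \<in> hullt \<tau>"
    using descent[OF _ n] x by (auto simp: Bs_def)
  have i: "(x - s *\<^sub>R u - v) \<bullet> u = t - s" using x uu by (simp add: Bs_def inner_diff_left)
  then have "x - s *\<^sub>R u \<in> convex hull {v, b1 \<tau>, c1 \<tau>}" using low_part[OF \<tau>] s by simp
  moreover have "prj (x - s *\<^sub>R u) = x" using i by (simp add: prj_def)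
  ultimately show ?thesis using \<tau>(1) by (metis image_eqI)
qed

lemma b1_Bs: "\<tau> \<in> Lat \<Longrightarrow> b1 \<tau> \<in> Bs" and c1_Bs: "\<tau> \<in> Lat \<Longrightarrow> c1 \<tau> \<in> Bs"
proof -
  assume \<tau>: "\<tau> \<in> Lat"
  note S = s_props[OF \<tau>]
  have mem: "b1 \<tau> \<in> hullt \<tau>" "c1 \<tau> \<in> hullt \<tau>"
    using hull_coords[OF \<tau>, of "sb \<tau>" 0] hull_coords[OF \<tau>, of 0 "sc \<tau>"] S
    by (auto simp: b1_def c1_def)
  have P: "hullt \<tau> \<subseteq> P" using \<tau> hullt_P by (auto simp: Lat_def)
  have "norm (b1 \<tau> - v) < rho / 2" "norm (c1 \<tau> - v) < rho / 2"
    using lat_small[OF \<tau>] mem S by auto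
  then show "b1 \<tau> \<in> Bs" "c1 \<tau> \<in> Bs"
    using mem P S rho_r rho_pos by (auto simp: Bs_def dist_norm norm_minus_commute)
qed

definition Fset where "Fset = (\<Union>\<tau>\<in>Lat. {b1 \<tau>, c1 \<tau>})"

lemma perp_exists: "\<exists>w. w \<noteq> 0 \<and> w \<bullet> u = 0"
proof -
  obtain e1 e2 where o: "orthon e1 e2" and c: "e1 \<times> e2 = u" using frame_exists uu by blast
  have "e1 \<noteq> 0" using o by (auto simp: orthon_def)
  moreover have "e1 \<bullet> u = 0" using c by (metis dot_cross_self(1))
  ultimately show ?thesis by blast
qed

lemma extreme_Bs: "x extreme_point_of Bs \<Longrightarrow> x \<in> Fset"
proof -
  assume ex: "x extreme_point_of Bs"
  then have xB: "x \<in> Bs" by (simp add: extreme_point_of_def)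
  have xs: "norm (x - v) < rho / 2" using Bs_small[OF xB] .
  have "x \<notin> interior P"
  proof
    assume "x \<in> interior P"
    then obtain e where e: "e > 0" "ball x e \<subseteq> P"
      by (meson open_contains_ball open_interior interior_subset subset_trans)
    obtain w where w: "w \<noteq> 0" "w \<bullet> u = 0" using perp_exists by blast
    define d where "d = min (e / 2) (rho / 4) / norm w"
    have d: "d > 0" "d * norm w < e" "d * norm w \<le> rho / 4"
      using e w rho_pos by (auto simp: d_def)
    have mem: "x + c *\<^sub>R (d *\<^sub>R w) \<in> Bs" if "\<bar>c\<bar> \<le> 1" for c
    proof -
      have nn: "norm (c *\<^sub>R (d *\<^sub>R w)) \<le> d * norm w"
        using that d by (simp add: mult_left_le_one_le mult.assoc[symmetric] abs_mult mult_le_cancel_right1)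
      then have "x + c *\<^sub>R (d *\<^sub>R w) \<in> ball x e" using d by (simp add: dist_norm)
      then have inP: "x + c *\<^sub>R (d *\<^sub>R w) \<in> P" using e by blast
      have "norm (x + c *\<^sub>R (d *\<^sub>R w) - v) \<le> norm (x - v) + norm (c *\<^sub>R (d *\<^sub>R w))"
        by (metis add.commute add_diff_eq norm_triangle_ineq diff_add_eq)
      then have "norm (x + c *\<^sub>R (d *\<^sub>R w) - v) < r" using xs nn d rho_r rho_pos by linarith
      moreover have "(x + c *\<^sub>R (d *\<^sub>R w) - v) \<bullet> u = t"
        using xB w by (simp add: Bs_def inner_add_left inner_diff_left)
      ultimately show ?thesis using inP by (auto simp: Bs_def dist_norm norm_minus_commute)
    qed
    have "x \<in> open_segment (x - d *\<^sub>R w) (x + d *\<^sub>R w)"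
      using d w by (intro mid_open_seg) auto
    moreover have "x - d *\<^sub>R w \<in> Bs" using mem[of "-1"] by simp
    moreover have "x + d *\<^sub>R w \<in> Bs" using mem[of 1] by simp
    ultimately show False using ex by (auto simp: extreme_point_of_def)
  qed
  then have "x \<in> frontier P" using xB closedP by (simp add: Bs_def frontier_def closure_closed)
  moreover have "norm (x - v) < DD" using xs rho_pos by (simp add: rho_def)
  ultimately obtain \<tau> where \<tau>: "\<tau> \<in> Lat" "x \<in> hullt \<tau>" using near_lat by blast
  then have seg: "x \<in> closed_segment (b1 \<tau>) (c1 \<tau>)" using mid_part xB by (simp add: Bs_def)
  show "x \<in> Fset"
  proof (rule ccontr)
    assume "x \<notin> Fset"
    then have "x \<in> open_segment (b1 \<tau>) (c1 \<tau>)" using seg \<tau> by (auto simp: Fset_def open_segment_def)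
    then show False using ex b1_Bs[OF \<tau>(1)] c1_Bs[OF \<tau>(1)] by (auto simp: extreme_point_of_def)
  qed
qed

lemma Bs_hull: "Bs = convex hull Fset"
proof
  have "Bs = convex hull {x. x extreme_point_of Bs}"
    by (rule Krein_Milman_Minkowski[OF compact_Bs convex_Bs])
  also have "\<dots> \<subseteq> convex hull Fset" using extreme_Bs by (intro hull_mono) auto
  finally show "Bs \<subseteq> convex hull Fset" .
  show "convex hull Fset \<subseteq> Bs"
    using b1_Bs c1_Bs convex_Bs by (intro hull_minimal) (auto simp: Fset_def)
qed

lemma finite_Fset: "finite Fset" using finLat by (simp add: Fset_def)

lemma polytope_Bs: "polytope Bs" unfolding polytope_def using Bs_hull finite_Fset by blast


definition Kc where "Kc = P \<inter> cball v r"

lemma wp_exists: "\<exists>w. w \<in> interior Kc \<and> w \<in> Hp"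
proof -
  define sp where "sp = (pp - v) \<bullet> u"
  have sp: "sp > 0" "t < sp" using pp_pos t_le(4) by (auto simp: sp_def)
  have ppK: "pp \<in> interior Kc"
    using pp rho_r by (simp add: Kc_def dist_norm norm_minus_commute)
  have vK: "v \<in> closure Kc" using vP rpos closure_subset by (force simp: Kc_def)
  have ppv: "pp \<noteq> v" using pp(1) v_frontier by (auto simp: frontier_def)
  define w where "w = (1 - (1 - t / sp)) *\<^sub>R pp + (1 - t / sp) *\<^sub>R v"
  have "w \<in> open_segment pp v"
    unfolding in_segment using sp ppv t0 by (intro conjI exI[of _ "1 - t / sp"]) (auto simp: w_def field_simps)
  then have "w \<in> interior Kc"
    using in_interior_closure_convex_segment[OF _ ppK vK] cvx by (auto simp: Kc_def)
  moreover have "w - v = (t / sp) *\<^sub>R (pp - v)" by (simp add: w_def algebra_simps)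
  then have "(w - v) \<bullet> u = t" using sp by (simp add: sp_def)
  ultimately show ?thesis by (auto simp: Hp_def)
qed

lemma Bs_Kc: "Bs = Kc \<inter> Hp" by (simp add: Bs_eq Kc_def)

lemma noncover:
  fixes H :: "pt3 set"
  assumes "finite L" "\<And>S. S \<in> L \<Longrightarrow> closed S \<and> aff_dim S \<le> 1"
    and H: "convex H" "aff_dim H = 2"
  shows "x \<in> H \<Longrightarrow> e > 0 \<Longrightarrow> \<not> (H \<inter> ball x e \<subseteq> \<Union>L)"
  using assms(1,2)
proof (induction L arbitrary: x e rule: finite_induct)
  case empty
  then show ?case by auto
next
  case (insert S L)
  have "H \<inter> ball x e \<noteq> {}" using insert.prems by auto
  then have "aff_dim (H \<inter> ball x e) = 2"
    using aff_dim_convex_Int_open[OF H(1) open_ball, of x e] H by auto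
  moreover have "aff_dim S \<le> 1" using insert.prems by auto
  ultimately have "\<not> H \<inter> ball x e \<subseteq> S"
    using aff_dim_subset[of "H \<inter> ball x e" S] by linarith
  then obtain y where y: "y \<in> H" "y \<in> ball x e" "y \<notin> S" by blast
  have "open (- S)" using insert.prems by auto
  then obtain e1 where e1: "e1 > 0" "ball y e1 \<subseteq> - S" using y(3) open_contains_ball by blast
  define e' where "e' = min e1 (e - dist x y)"
  have e'0: "e' > 0" using e1 y(2) by (simp add: e'_def)
  have e'1: "ball y e' \<subseteq> ball x e"
  proof
    fix z assume "z \<in> ball y e'"
    then have "dist y z < e - dist x y" by (simp add: e'_def)
    moreover have "dist x z \<le> dist x y + dist y z" by (rule dist_triangle)
    ultimately show "z \<in> ball x e" by simp
  qed
  have e'2: "ball y e' \<subseteq> - S" using e1 by (auto simp: e'_def)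
  note e' = e'0 e'1 e'2
  have "\<not> H \<inter> ball y e' \<subseteq> \<Union>L" using insert.IH[OF y(1) e'(1)] insert.prems by auto
  then show ?case using e' by blast
qed

lemma Bs_triangulation:
  obtains TB where "tri_ok TB" "\<Union>(hullt ` TB) = Bs" "\<And>t. t \<in> TB \<Longrightarrow> vertt t \<subseteq> Hp"
proof -
  obtain \<T> where sc: "simplicial_complex \<T>" and un: "\<Union>\<T> = \<Union>{Bs}"
    using simplicial_subdivision_of_cell_complex[of "{Bs}"] polytope_Bs convex_Bs face_of_refl
    by (metis Int_absorb finite.emptyI finite.insertI singletonD)
  have fin: "finite \<T>" and simp: "\<And>S. S \<in> \<T> \<Longrightarrow> \<exists>n. n simplex S"
    and fc: "\<And>S S'. S \<in> \<T> \<Longrightarrow> S' \<in> \<T> \<Longrightarrow> (S \<inter> S') face_of S"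
    using sc by (auto simp: simplicial_complex_def)
  have subB: "S \<subseteq> Bs" if "S \<in> \<T>" for S using un that by auto
  have BH: "Bs \<subseteq> Hp" by (auto simp: Bs_def Hp_def)
  have ad: "aff_dim S \<le> 2" if "S \<in> \<T>" for S
    using aff_dim_subset[of S Hp] subB[OF that] BH aff_dim_Hp by auto
  define T2 where "T2 = {S\<in>\<T>. aff_dim S = 2}"
  have cl: "closed S" if "S \<in> \<T>" for S using simp[OF that] closed_simplex by blast
  have cover: "Bs \<subseteq> \<Union>T2"
  proof
    fix x assume xB: "x \<in> Bs"
    show "x \<in> \<Union>T2"
    proof (rule ccontr)
      assume nx: "x \<notin> \<Union>T2"
      have "closed (\<Union>T2)" using fin cl by (auto simp: T2_def)
      then have "open (- \<Union>T2)" by auto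
      then obtain e where e: "e > 0" "ball x e \<subseteq> - \<Union>T2" using nx open_contains_ball by blast
      obtain w where w: "w \<in> interior Kc" "w \<in> Hp" using wp_exists by blast
      define lam where "lam = min (1/2) (e / (2 * (norm (w - x) + 1)))"
      have lam: "0 < lam" "lam < 1" "lam * norm (w - x) < e / 2"
      proof -
        have "0 < 2 * (norm (w - x) + 1)" by (simp add: add_nonneg_pos)
        then show "0 < lam" "lam < 1" using e by (auto simp: lam_def)
        have "lam * norm (w - x) \<le> (e / (2 * (norm (w - x) + 1))) * norm (w - x)"
          by (intro mult_right_mono) (auto simp: lam_def)
        also have "\<dots> = (e / 2) * (norm (w - x) / (norm (w - x) + 1))" by (simp add: field_simps)
        also have "\<dots> < (e / 2) * 1"
        proof (rule mult_strict_left_mono)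
          show "norm (w - x) / (norm (w - x) + 1) < 1" by (simp add: add_nonneg_pos)
        qed (use e in auto)
        also have "\<dots> = e / 2" by simp
        finally show "lam * norm (w - x) < e / 2" .
      qed
      define x2 where "x2 = (1 - lam) *\<^sub>R x + lam *\<^sub>R w"
      have xK: "x \<in> closure Kc" using xB closure_subset by (auto simp: Bs_Kc)
      have x2K: "x2 \<in> interior Kc"
      proof (cases "w = x")
        case True then show ?thesis using w by (simp add: x2_def algebra_simps)
      next
        case False
        have "x2 \<in> open_segment w x"
          unfolding in_segment using False lam by (intro conjI exI[of _ "1 - lam"]) (auto simp: x2_def)
        then show ?thesis using in_interior_closure_convex_segment[OF _ w(1) xK] cvx by (auto simp: Kc_def)
      qed
      have x2H: "x2 \<in> Hp"
      proof -
        have "x2 - v = (1 - lam) *\<^sub>R (x - v) + lam *\<^sub>R (w - v)" by (simp add: x2_def algebra_simps)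
        then have "(x2 - v) \<bullet> u = (1 - lam) * ((x - v) \<bullet> u) + lam * ((w - v) \<bullet> u)"
          by (simp add: inner_add_left)
        moreover have "(x - v) \<bullet> u = t" "(w - v) \<bullet> u = t" using xB w(2) by (auto simp: Bs_def Hp_def)
        ultimately show ?thesis by (simp add: Hp_def algebra_simps)
      qed
      have dx2: "dist x2 x < e / 2"
      proof -
        have "x2 - x = lam *\<^sub>R (w - x)" by (simp add: x2_def algebra_simps)
        then show ?thesis using lam by (simp add: dist_norm)
      qed
      obtain e2 where e2: "e2 > 0" "ball x2 e2 \<subseteq> Kc"
        using x2K by (meson open_contains_ball open_interior interior_subset subset_trans)
      define e3 where "e3 = min e2 (e / 2)"
      have e3: "e3 > 0" using e2 e by (simp add: e3_def)
      have "Hp \<inter> ball x2 e3 \<subseteq> \<Union>(\<T> - T2)"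
      proof
        fix y assume y: "y \<in> Hp \<inter> ball x2 e3"
        then have yB: "y \<in> Bs" using e2 by (auto simp: Bs_Kc e3_def)
        have "dist x y \<le> dist x x2 + dist x2 y" by (rule dist_triangle)
        moreover have "dist x2 y < e / 2" using y by (simp add: e3_def)
        ultimately have "dist x y < e" using dx2 by (simp add: dist_commute)
        then have "y \<notin> \<Union>T2" using e by auto
        moreover obtain X where "X \<in> \<T>" "y \<in> X" using yB un by blast
        ultimately show "y \<in> \<Union>(\<T> - T2)" by blast
      qed
      moreover have "\<not> (Hp \<inter> ball x2 e3 \<subseteq> \<Union>(\<T> - T2))"
      proof (rule noncover[OF _ _ convex_Hp aff_dim_Hp x2H e3])
        show "finite (\<T> - T2)" using fin by simp
        fix S assume "S \<in> \<T> - T2"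
        then have "S \<in> \<T>" "aff_dim S \<noteq> 2" by (auto simp: T2_def)
        then show "closed S \<and> aff_dim S \<le> 1" using cl ad[of S] by auto
      qed
      ultimately show False by blast
    qed
  qed
  have tup_ex: "\<exists>t. hullt t = S \<and> ncol t" if S2: "S \<in> T2" for S
  proof -
    obtain n where "n simplex S" using simp S2 by (auto simp: T2_def)
    moreover have "aff_dim S = 2" using S2 by (simp add: T2_def)
    ultimately have "2 simplex S" using aff_dim_simplex by force
    then obtain C where C: "finite C" "\<not> affine_dependent C" "int (card C) = 3" "S = convex hull C"
      unfolding simplex by auto
    then obtain a b c where abc: "C = {a,b,c}" "a \<noteq> b" "b \<noteq> c" "a \<noteq> c"
      using card_3_iff[of C] by auto
    have "\<not> collinear {a,b,c}" using C(2) abc collinear_3_eq_affine_dependent by auto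
    then show ?thesis using C(4) abc by (intro exI[of _ "(a,b,c)"]) (auto simp: hullt_def ncol_def)
  qed
  define tup where "tup S = (SOME t. hullt t = S \<and> ncol t)" for S
  have tup: "hullt (tup S) = S" "ncol (tup S)" if "S \<in> T2" for S
    using someI_ex[OF tup_ex[OF that]] by (auto simp: tup_def)
  define TB where "TB = tup ` T2"
  have ok: "tri_ok TB"
    unfolding tri_ok_def
  proof (intro conjI ballI impI)
    show "finite TB" using fin by (simp add: TB_def T2_def)
    show "ncol t" if "t \<in> TB" for t using that tup by (auto simp: TB_def)
    fix t1 t2 assume t: "t1 \<in> TB" "t2 \<in> TB" "t1 \<noteq> t2"
    then obtain S1 S2 where S: "S1 \<in> T2" "S2 \<in> T2" "t1 = tup S1" "t2 = tup S2" by (auto simp: TB_def)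
    have h: "hullt t1 = S1" "hullt t2 = S2" using tup S by auto
    have ne: "S1 \<noteq> S2" using S t(3) by auto
    have f1: "(S1 \<inter> S2) face_of S1" and f2: "(S1 \<inter> S2) face_of S2"
      using fc[of S1 S2] fc[of S2 S1] S by (auto simp: T2_def Int_commute)
    show "rel_interior (hullt t1) \<inter> rel_interior (hullt t2) = {}"
    proof (rule ccontr)
      assume "rel_interior (hullt t1) \<inter> rel_interior (hullt t2) \<noteq> {}"
      then obtain z where z: "z \<in> rel_interior S1" "z \<in> rel_interior S2" using h by auto
      have zz: "z \<in> S1 \<inter> S2" using z rel_interior_subset by blast
      have "S1 \<inter> S2 = S1" using face_of_disjoint_rel_interior[OF f1] z zz by blast
      moreover have "S1 \<inter> S2 = S2" using face_of_disjoint_rel_interior[OF f2] z zz by blast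
      ultimately show False using ne by blast
    qed
  qed
  have "\<Union>(hullt ` TB) = \<Union>T2" using tup by (auto simp: TB_def)
  also have "\<dots> = Bs" using cover un by (auto simp: T2_def)
  finally have u: "\<Union>(hullt ` TB) = Bs" .
  have "vertt t \<subseteq> Hp" if "t \<in> TB" for t
  proof -
    have "vertt t \<subseteq> hullt t" by (simp add: hullt_eq hull_subset)
    also have "\<dots> \<subseteq> Bs" using that u by auto
    finally show ?thesis using BH by blast
  qed
  then show ?thesis using that ok u by blast
qed

end

lemma areat_nrm: "areat t = norm (nrm t) / 2"
  by (cases t) (simp add: areat_def nrm_def tri_area_def)

lemma cross_proj:
  fixes a b u :: pt3
  assumes uu: "u \<bullet> u = 1"
  shows "(a - (a \<bullet> u) *\<^sub>R u) \<times> (b - (b \<bullet> u) *\<^sub>R u) = ((a \<times> b) \<bullet> u) *\<^sub>R u"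
proof -
  have l1: "u \<times> (u \<times> (a \<times> b)) = (u \<bullet> (a \<times> b)) *\<^sub>R u - (a \<times> b)"
    using Lagrange[of u u "a \<times> b"] uu by simp
  have l2: "u \<times> (a \<times> b) = (u \<bullet> b) *\<^sub>R a - (u \<bullet> a) *\<^sub>R b" by (rule Lagrange)
  have l3: "u \<times> (u \<times> (a \<times> b)) = (u \<bullet> b) *\<^sub>R (u \<times> a) - (u \<bullet> a) *\<^sub>R (u \<times> b)"
    by (simp add: l2 Cross3.right_diff_distrib cross_mult_right)
  have sk: "a \<times> u = - (u \<times> a)" by (rule cross_skew)
  have "(a - (a \<bullet> u) *\<^sub>R u) \<times> (b - (b \<bullet> u) *\<^sub>R u)
      = a \<times> b - (b \<bullet> u) *\<^sub>R (a \<times> u) - (a \<bullet> u) *\<^sub>R (u \<times> b)"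
    by (simp add: Cross3.left_diff_distrib Cross3.right_diff_distrib cross_mult_left cross_mult_right)
  also have "\<dots> = a \<times> b + u \<times> (u \<times> (a \<times> b))"
    by (simp add: l3 sk inner_commute algebra_simps)
  also have "\<dots> = ((a \<times> b) \<bullet> u) *\<^sub>R u" by (simp add: l1 inner_commute)
  finally show ?thesis .
qed

context vtxt
begin

definition p1 where "p1 \<tau> = (b1 \<tau>, bo \<tau>, co \<tau>)"
definition p2 where "p2 \<tau> = (b1 \<tau>, co \<tau>, c1 \<tau>)"
definition sm where "sm \<tau> = (v, b1 \<tau>, c1 \<tau>)"
definition Nv where "Nv \<tau> = (bo \<tau> - v) \<times> (co \<tau> - v)"

lemma Nv_nz: "\<tau> \<in> Lat \<Longrightarrow> Nv \<tau> \<noteq> 0"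
proof -
  assume \<tau>: "\<tau> \<in> Lat"
  have "ncol (v, bo \<tau>, co \<tau>)" using Lat_props(3)[OF \<tau>] by (simp add: ncol_def)
  then show ?thesis using ncol_nrm by (fastforce simp: Nv_def nrm_def)
qed

lemma nrm_pieces:
  "nrm (p1 \<tau>) = (1 - sb \<tau>) *\<^sub>R Nv \<tau>"
  "nrm (p2 \<tau>) = (sb \<tau> * (1 - sc \<tau>)) *\<^sub>R Nv \<tau>"
  "nrm (sm \<tau>) = (sb \<tau> * sc \<tau>) *\<^sub>R Nv \<tau>"
proof -
  define B where "B = bo \<tau> - v"
  define C where "C = co \<tau> - v"
  have sk: "C \<times> B = - (B \<times> C)" by (rule cross_skew)
  have e1: "bo \<tau> - b1 \<tau> = (1 - sb \<tau>) *\<^sub>R B" by (simp add: b1_def B_def algebra_simps)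
  have e2: "co \<tau> - b1 \<tau> = C - sb \<tau> *\<^sub>R B" by (simp add: b1_def B_def C_def algebra_simps)
  have e3: "c1 \<tau> - b1 \<tau> = sc \<tau> *\<^sub>R C - sb \<tau> *\<^sub>R B" by (simp add: b1_def c1_def B_def C_def algebra_simps)
  have e4: "b1 \<tau> - v = sb \<tau> *\<^sub>R B" "c1 \<tau> - v = sc \<tau> *\<^sub>R C" by (simp_all add: b1_def c1_def B_def C_def)
  show "nrm (p1 \<tau>) = (1 - sb \<tau>) *\<^sub>R Nv \<tau>"
    unfolding p1_def nrm_def Nv_def B_def[symmetric] C_def[symmetric] case_prod_conv e1 e2
    by (simp add: Cross3.right_diff_distrib cross_mult_left cross_mult_right)
  show "nrm (p2 \<tau>) = (sb \<tau> * (1 - sc \<tau>)) *\<^sub>R Nv \<tau>"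
    unfolding p2_def nrm_def Nv_def B_def[symmetric] C_def[symmetric] case_prod_conv e2 e3
    by (simp add: Cross3.right_diff_distrib Cross3.left_diff_distrib cross_mult_left cross_mult_right sk algebra_simps)
  show "nrm (sm \<tau>) = (sb \<tau> * sc \<tau>) *\<^sub>R Nv \<tau>"
    unfolding sm_def nrm_def Nv_def B_def[symmetric] C_def[symmetric] case_prod_conv e4
    by (simp add: cross_mult_left cross_mult_right)
qed

lemma pieces_ncol:
  assumes \<tau>: "\<tau> \<in> Lat" shows "ncol (p1 \<tau>)" "ncol (p2 \<tau>)" "ncol (sm \<tau>)"
  using nrm_pieces[of \<tau>] Nv_nz[OF \<tau>] s_props[OF \<tau>] nrm_ncol by auto

lemma area_pieces:
  assumes \<tau>: "\<tau> \<in> Lat"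
  shows "areat (p1 \<tau>) + areat (p2 \<tau>) = areat \<tau> - areat (sm \<tau>)"
proof -
  note S = s_props[OF \<tau>]
  have a\<tau>: "areat \<tau> = norm (Nv \<tau>) / 2"
    using Lat_props(2)[OF \<tau>] by (simp add: Nv_def tri_area_def)
  have a1: "areat (p1 \<tau>) = (1 - sb \<tau>) * norm (Nv \<tau>) / 2"
    using S by (simp only: areat_nrm nrm_pieces norm_scaleR)
  have a2: "areat (p2 \<tau>) = (sb \<tau> * (1 - sc \<tau>)) * norm (Nv \<tau>) / 2"
    using S by (simp only: areat_nrm nrm_pieces norm_scaleR) (simp add: abs_mult)
  have a3: "areat (sm \<tau>) = (sb \<tau> * sc \<tau>) * norm (Nv \<tau>) / 2"
    using S by (simp only: areat_nrm nrm_pieces norm_scaleR) (simp add: abs_mult)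
  show ?thesis unfolding a1 a2 a3 a\<tau> by (simp add: field_simps)
qed

lemma pieces_in:
  assumes \<tau>: "\<tau> \<in> Lat"
  shows "vertt (p1 \<tau>) \<subseteq> hullt \<tau>" "vertt (p2 \<tau>) \<subseteq> hullt \<tau>"
proof -
  note S = s_props[OF \<tau>]
  have mem: "b1 \<tau> \<in> hullt \<tau>" "bo \<tau> \<in> hullt \<tau>" "co \<tau> \<in> hullt \<tau>" "c1 \<tau> \<in> hullt \<tau>"
    using hull_coords[OF \<tau>, of "sb \<tau>" 0] hull_coords[OF \<tau>, of 1 0] hull_coords[OF \<tau>, of 0 1]
      hull_coords[OF \<tau>, of 0 "sc \<tau>"] S
    by (auto simp: b1_def c1_def)
  then show "vertt (p1 \<tau>) \<subseteq> hullt \<tau>" "vertt (p2 \<tau>) \<subseteq> hullt \<tau>" by (auto simp: p1_def p2_def vertt_def)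
qed

lemma relint_sub_piece:
  assumes \<tau>: "\<tau> \<in> Lat" and p: "vertt p \<subseteq> hullt \<tau>" and nc: "ncol p"
  shows "rel_interior (hullt p) \<subseteq> rel_interior (hullt \<tau>)"
proof (rule subset_rel_interior)
  have c: "convex (hullt \<tau>)" by (simp add: hullt_eq)
  show "hullt p \<subseteq> hullt \<tau>" using p c by (simp add: hullt_eq hull_minimal)
  have n\<tau>: "ncol \<tau>" using \<tau> ncolT by (auto simp: Lat_def)
  have "vertt p \<subseteq> pl \<tau>" using p hullt_sub_pl by blast
  then have "pl \<tau> = pl p" using plane_unique[OF pl_isplane[OF n\<tau>] nc] by blast
  then show "affine hull (hullt p) = affine hull (hullt \<tau>)"
    using pl_aff[OF n\<tau>] pl_aff[OF nc] by (simp add: hullt_eq affine_hull_convex_hull)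
qed

lemma relint_p1: "\<tau> \<in> Lat \<Longrightarrow> rel_interior (hullt (p1 \<tau>)) \<subseteq> rel_interior (hullt \<tau>)"
  using relint_sub_piece pieces_in pieces_ncol by blast
lemma relint_p2: "\<tau> \<in> Lat \<Longrightarrow> rel_interior (hullt (p2 \<tau>)) \<subseteq> rel_interior (hullt \<tau>)"
  using relint_sub_piece pieces_in pieces_ncol by blast

lemma relint_gt:
  assumes \<tau>: "\<tau> \<in> Lat" and y: "y \<in> rel_interior (hullt (p1 \<tau>)) \<or> y \<in> rel_interior (hullt (p2 \<tau>))"
  shows "(y - v) \<bullet> u > t"
proof -
  note S = s_props[OF \<tau>]
  have big: "(bo \<tau> - v) \<bullet> u > t" "(co \<tau> - v) \<bullet> u > t"
    using mm_le[OF \<tau>] t_le(2) mm_pos by auto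
  show ?thesis using y
  proof
    assume y1: "y \<in> rel_interior (hullt (p1 \<tau>))"
    have nc: "\<not> collinear {b1 \<tau>, bo \<tau>, co \<tau>}" using pieces_ncol(1)[OF \<tau>] by (simp add: p1_def ncol_def)
    obtain wa wb wc where w: "0 < wa" "0 < wb" "0 < wc" "wa + wb + wc = 1"
      "(y - v) \<bullet> u = wa * ((b1 \<tau> - v) \<bullet> u) + wb * ((bo \<tau> - v) \<bullet> u) + wc * ((co \<tau> - v) \<bullet> u)"
      using relint3[OF nc, of y v u] y1 by (auto simp: p1_def hullt_def)
    have "wb * ((bo \<tau> - v) \<bullet> u) > wb * t" "wc * ((co \<tau> - v) \<bullet> u) \<ge> wc * t"
      using w big by auto
    moreover have e: "(y - v) \<bullet> u = wa * t + wb * ((bo \<tau> - v) \<bullet> u) + wc * ((co \<tau> - v) \<bullet> u)"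
      using w(5) S(5) by simp
    moreover have "wa * t + wb * t + wc * t = t" using w(4) by (metis distrib_right mult_1)
    ultimately show ?thesis by linarith
  next
    assume y2: "y \<in> rel_interior (hullt (p2 \<tau>))"
    have nc: "\<not> collinear {b1 \<tau>, co \<tau>, c1 \<tau>}" using pieces_ncol(2)[OF \<tau>] by (simp add: p2_def ncol_def)
    obtain wa wb wc where w: "0 < wa" "0 < wb" "0 < wc" "wa + wb + wc = 1"
      "(y - v) \<bullet> u = wa * ((b1 \<tau> - v) \<bullet> u) + wb * ((co \<tau> - v) \<bullet> u) + wc * ((c1 \<tau> - v) \<bullet> u)"
      using relint3[OF nc, of y v u] y2 by (auto simp: p2_def hullt_def)
    have "wb * ((co \<tau> - v) \<bullet> u) > wb * t" using w big by auto
    moreover have e: "(y - v) \<bullet> u = wa * t + wb * ((co \<tau> - v) \<bullet> u) + wc * t"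
      using w(5) S(5) S(6) by simp
    moreover have "wa * t + wb * t + wc * t = t" using w(4) by (metis distrib_right mult_1)
    ultimately show ?thesis by linarith
  qed
qed

lemma relint_p12:
  assumes \<tau>: "\<tau> \<in> Lat"
  shows "rel_interior (hullt (p1 \<tau>)) \<inter> rel_interior (hullt (p2 \<tau>)) = {}"
proof (rule ccontr)
  assume "rel_interior (hullt (p1 \<tau>)) \<inter> rel_interior (hullt (p2 \<tau>)) \<noteq> {}"
  then obtain y where y1: "y \<in> rel_interior (hullt (p1 \<tau>))" and y2: "y \<in> rel_interior (hullt (p2 \<tau>))" by blast
  note S = s_props[OF \<tau>]
  define B where "B = bo \<tau> - v"
  define C where "C = co \<tau> - v"
  define N where "N = Nv \<tau>"
  have NB: "N = B \<times> C" by (simp add: N_def Nv_def B_def C_def)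
  have NN: "N \<bullet> N > 0" using Nv_nz[OF \<tau>] by (simp add: N_def)
  define G where "G = (1 / (N \<bullet> N)) *\<^sub>R ((1 / sb \<tau>) *\<^sub>R (C \<times> N) + N \<times> B)"
  have t1: "B \<bullet> (C \<times> N) = N \<bullet> N"
    by (metis NB cross_triple inner_commute)
  have t2: "C \<bullet> (N \<times> B) = N \<bullet> N"
    by (metis NB cross_triple inner_commute)
  have t3: "C \<bullet> (C \<times> N) = 0" "B \<bullet> (N \<times> B) = 0" by (simp_all add: dot_cross_self)
  have BG: "B \<bullet> G = 1 / sb \<tau>" using NN t1 t3 by (simp add: G_def inner_add_right)
  have CG: "C \<bullet> G = 1" using NN t2 t3 by (simp add: G_def inner_add_right)
  have vals: "(b1 \<tau> - v) \<bullet> G = 1" "(bo \<tau> - v) \<bullet> G = 1 / sb \<tau>" "(co \<tau> - v) \<bullet> G = 1"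
    "(c1 \<tau> - v) \<bullet> G = sc \<tau>"
    using BG CG S by (simp_all add: b1_def c1_def B_def[symmetric] C_def[symmetric])
  have big: "1 / sb \<tau> > 1" using S by simp
  have nc1: "\<not> collinear {b1 \<tau>, bo \<tau>, co \<tau>}" using pieces_ncol(1)[OF \<tau>] by (simp add: p1_def ncol_def)
  obtain wa wb wc where w: "0 < wa" "0 < wb" "0 < wc" "wa + wb + wc = 1"
    "(y - v) \<bullet> G = wa * ((b1 \<tau> - v) \<bullet> G) + wb * ((bo \<tau> - v) \<bullet> G) + wc * ((co \<tau> - v) \<bullet> G)"
    using relint3[OF nc1, of y v G] y1 by (auto simp: p1_def hullt_def)
  have "wb * 1 < wb * (1 / sb \<tau>)" using mult_strict_left_mono[OF big w(2)] .
  then have "wb * (1 / sb \<tau>) > wb" by simp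
  then have g1: "(y - v) \<bullet> G > 1" using w vals by simp
  have nc2: "\<not> collinear {b1 \<tau>, co \<tau>, c1 \<tau>}" using pieces_ncol(2)[OF \<tau>] by (simp add: p2_def ncol_def)
  obtain za zb zc where z: "0 < za" "0 < zb" "0 < zc" "za + zb + zc = 1"
    "(y - v) \<bullet> G = za * ((b1 \<tau> - v) \<bullet> G) + zb * ((co \<tau> - v) \<bullet> G) + zc * ((c1 \<tau> - v) \<bullet> G)"
    using relint3[OF nc2, of y v G] y2 by (auto simp: p2_def hullt_def)
  have lt: "zc * sc \<tau> < zc * 1" using z S by (intro mult_strict_left_mono) auto
  have "(y - v) \<bullet> G = za + zb + zc * sc \<tau>" using z(5) vals by simp
  then have "(y - v) \<bullet> G < 1" using lt z(4) by linarith
  with g1 show False by simp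
qed


definition TBs where "TBs = (SOME TB. tri_ok TB \<and> \<Union>(hullt ` TB) = Bs \<and> (\<forall>t\<in>TB. vertt t \<subseteq> Hp))"

lemma TBs: "tri_ok TBs" "\<Union>(hullt ` TBs) = Bs" "\<And>t. t \<in> TBs \<Longrightarrow> vertt t \<subseteq> Hp"
proof -
  have ex: "\<exists>TB. tri_ok TB \<and> \<Union>(hullt ` TB) = Bs \<and> (\<forall>t\<in>TB. vertt t \<subseteq> Hp)"
    using Bs_triangulation by metis
  show "tri_ok TBs" "\<Union>(hullt ` TBs) = Bs" "\<And>t. t \<in> TBs \<Longrightarrow> vertt t \<subseteq> Hp"
    using someI_ex[OF ex] unfolding TBs_def[symmetric] by auto
qed

definition TQ where "TQ = (T - Lat) \<union> p1 ` Lat \<union> p2 ` Lat \<union> TBs"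

abbreviation ri where "ri x \<equiv> rel_interior (hullt x)"

lemma LatT: "Lat \<subseteq> T" by (auto simp: Lat_def)

lemma ri_T: "a \<in> T \<Longrightarrow> b \<in> T \<Longrightarrow> a \<noteq> b \<Longrightarrow> ri a \<inter> ri b = {}"
  using okT by (auto simp: tri_ok_def)

lemma ri_piece: "\<tau> \<in> Lat \<Longrightarrow> b \<in> {p1 \<tau>, p2 \<tau>} \<Longrightarrow> ri b \<subseteq> ri \<tau>"
proof -
  assume \<tau>: "\<tau> \<in> Lat" and b: "b \<in> {p1 \<tau>, p2 \<tau>}"
  then have "b = p1 \<tau> \<or> b = p2 \<tau>" by simp
  then show ?thesis using relint_p1[OF \<tau>] relint_p2[OF \<tau>] by blast
qed

lemma L_NP: "a \<in> T - Lat \<Longrightarrow> \<tau> \<in> Lat \<Longrightarrow> b \<in> {p1 \<tau>, p2 \<tau>} \<Longrightarrow> ri a \<inter> ri b = {}"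
proof -
  assume a: "a \<in> T - Lat" and \<tau>: "\<tau> \<in> Lat" and b: "b \<in> {p1 \<tau>, p2 \<tau>}"
  have "ri a \<inter> ri \<tau> = {}" using ri_T a \<tau> LatT by blast
  then show ?thesis using ri_piece[OF \<tau> b] by blast
qed

lemma L_PP: "\<tau> \<in> Lat \<Longrightarrow> \<tau>' \<in> Lat \<Longrightarrow> \<tau> \<noteq> \<tau>' \<Longrightarrow> b \<in> {p1 \<tau>, p2 \<tau>} \<Longrightarrow> b' \<in> {p1 \<tau>', p2 \<tau>'}
   \<Longrightarrow> ri b \<inter> ri b' = {}"
proof -
  assume \<tau>: "\<tau> \<in> Lat" "\<tau>' \<in> Lat" "\<tau> \<noteq> \<tau>'" and b: "b \<in> {p1 \<tau>, p2 \<tau>}" "b' \<in> {p1 \<tau>', p2 \<tau>'}"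
  have "ri \<tau> \<inter> ri \<tau>' = {}" using ri_T \<tau> LatT by blast
  then show ?thesis using ri_piece[OF \<tau>(1) b(1)] ri_piece[OF \<tau>(2) b(2)] by blast
qed

lemma hull_TBs: "a \<in> TBs \<Longrightarrow> hullt a \<subseteq> Bs" using TBs(2) by auto

lemma L_BN: "a \<in> TBs \<Longrightarrow> b \<in> T - Lat \<Longrightarrow> ri a \<inter> ri b = {}"
proof -
  assume a: "a \<in> TBs" and b: "b \<in> T - Lat"
  have "hullt a \<inter> hullt b = {}"
  proof (rule ccontr)
    assume "hullt a \<inter> hullt b \<noteq> {}"
    then obtain x where x: "x \<in> Bs" "x \<in> hullt b" using hull_TBs[OF a] by blast
    have "norm (x - v) < rho / 2" using Bs_small[OF x(1)] .
    then have "norm (x - v) < DD" using rho_pos by (simp add: rho_def)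
    then show False using DD_far[of b x] b x by auto
  qed
  then show ?thesis using rel_interior_subset by blast
qed

lemma L_BP: "a \<in> TBs \<Longrightarrow> \<tau> \<in> Lat \<Longrightarrow> b \<in> {p1 \<tau>, p2 \<tau>} \<Longrightarrow> ri a \<inter> ri b = {}"
proof -
  assume a: "a \<in> TBs" and \<tau>: "\<tau> \<in> Lat" and b: "b \<in> {p1 \<tau>, p2 \<tau>}"
  have "ri a \<subseteq> {x. (x - v) \<bullet> u = t}" using hull_TBs[OF a] rel_interior_subset by (force simp: Bs_def)
  moreover have "ri b \<subseteq> {x. (x - v) \<bullet> u > t}" using relint_gt[OF \<tau>] b by auto
  ultimately show ?thesis by force
qed

lemma ri_ne: "ncol a \<Longrightarrow> ri a \<noteq> {}" by (rule relint_nonempty)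

lemma ncol_TQ: "a \<in> TQ \<Longrightarrow> ncol a"
  using ncolT pieces_ncol TBs(1) unfolding TQ_def tri_ok_def by blast

lemma tri_ok_TQ: "tri_ok TQ"
  unfolding tri_ok_def
proof (intro conjI ballI impI)
  show "finite TQ" using finT finLat TBs(1) by (auto simp: TQ_def tri_ok_def)
  show "ncol a" if "a \<in> TQ" for a using ncol_TQ that .
  fix a b assume a: "a \<in> TQ" and b: "b \<in> TQ" and ab: "a \<noteq> b"
  have tb: "ri a \<inter> ri b = {}" if "a \<in> TBs" "b \<in> TBs" "a \<noteq> b" for a b
    using TBs(1) that by (auto simp: tri_ok_def)
  have pp: "ri a \<inter> ri b = {}" if "\<tau> \<in> Lat" "\<tau>' \<in> Lat" "a \<in> {p1 \<tau>, p2 \<tau>}" "b \<in> {p1 \<tau>', p2 \<tau>'}" "a \<noteq> b"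
    for \<tau> \<tau>' a b
  proof (cases "\<tau> = \<tau>'")
    case True
    then show ?thesis using that relint_p12[OF that(1)] by auto
  next
    case False then show ?thesis using L_PP that by blast
  qed
  have cases_a: "a \<in> T - Lat \<or> (\<exists>\<tau>\<in>Lat. a \<in> {p1 \<tau>, p2 \<tau>}) \<or> a \<in> TBs" using a by (auto simp: TQ_def)
  have cases_b: "b \<in> T - Lat \<or> (\<exists>\<tau>\<in>Lat. b \<in> {p1 \<tau>, p2 \<tau>}) \<or> b \<in> TBs" using b by (auto simp: TQ_def)
  show "ri a \<inter> ri b = {}"
    using cases_a cases_b
  proof (elim disjE bexE)
    assume "a \<in> T - Lat" "b \<in> T - Lat" then show ?thesis using ri_T ab by blast
  next
    fix \<tau> assume "a \<in> T - Lat" "\<tau> \<in> Lat" "b \<in> {p1 \<tau>, p2 \<tau>}" then show ?thesis using L_NP by blast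
  next
    assume "a \<in> T - Lat" "b \<in> TBs" then show ?thesis using L_BN by blast
  next
    fix \<tau> assume "\<tau> \<in> Lat" "a \<in> {p1 \<tau>, p2 \<tau>}" "b \<in> T - Lat" then show ?thesis using L_NP by blast
  next
    fix \<tau> \<tau>' assume "\<tau> \<in> Lat" "a \<in> {p1 \<tau>, p2 \<tau>}" "\<tau>' \<in> Lat" "b \<in> {p1 \<tau>', p2 \<tau>'}"
    then show ?thesis using pp ab by blast
  next
    fix \<tau> assume "\<tau> \<in> Lat" "a \<in> {p1 \<tau>, p2 \<tau>}" "b \<in> TBs" then show ?thesis using L_BP by blast
  next
    assume "a \<in> TBs" "b \<in> T - Lat" then show ?thesis using L_BN by blast
  next
    fix \<tau> assume "a \<in> TBs" "\<tau> \<in> Lat" "b \<in> {p1 \<tau>, p2 \<tau>}" then show ?thesis using L_BP by blast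
  next
    assume "a \<in> TBs" "b \<in> TBs" then show ?thesis using tb ab by blast
  qed
qed

lemma union_TQ: "\<Union>(hullt ` TQ) = frontier Q"
proof -
  have "\<Union>(hullt ` TQ) = \<Union>(hullt ` (T - Lat)) \<union> (\<Union>\<tau>\<in>Lat. hullt (p1 \<tau>) \<union> hullt (p2 \<tau>)) \<union> \<Union>(hullt ` TBs)"
    by (auto simp: TQ_def)
  also have "(\<Union>\<tau>\<in>Lat. hullt (p1 \<tau>) \<union> hullt (p2 \<tau>)) = (\<Union>\<tau>\<in>Lat. hullt \<tau> \<inter> {y. (y - v) \<bullet> u \<ge> t})"
    using piece_split by (simp add: p1_def p2_def hullt_def)
  finally show ?thesis using frontier_Q fP_minus_U TBs(2) by simp
qed

lemma triangulates_TQ: "triangulates TQ (frontier Q)"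
  using tri_ok_TQ union_TQ by (simp add: triangulates_iff)

lemma class_disj:
  assumes "\<And>a b. a \<in> A \<Longrightarrow> b \<in> B \<Longrightarrow> ri a \<inter> ri b = {}" "\<And>a. a \<in> A \<Longrightarrow> ncol a"
  shows "A \<inter> B = {}"
  using assms ri_ne by fastforce

lemma inj_p1: "inj_on p1 Lat" and inj_p2: "inj_on p2 Lat"
proof -
  show "inj_on p1 Lat"
  proof (rule inj_onI)
    fix x y assume xy: "x \<in> Lat" "y \<in> Lat" "p1 x = p1 y"
    show "x = y"
    proof (rule ccontr)
      assume "x \<noteq> y"
      then have "ri (p1 x) \<inter> ri (p1 y) = {}" using L_PP[OF xy(1,2)] by blast
      then show False using xy(3) ri_ne pieces_ncol(1)[OF xy(1)] by auto
    qed
  qed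
  show "inj_on p2 Lat"
  proof (rule inj_onI)
    fix x y assume xy: "x \<in> Lat" "y \<in> Lat" "p2 x = p2 y"
    show "x = y"
    proof (rule ccontr)
      assume "x \<noteq> y"
      then have "ri (p2 x) \<inter> ri (p2 y) = {}" using L_PP[OF xy(1,2)] by blast
      then show False using xy(3) ri_ne pieces_ncol(2)[OF xy(1)] by auto
    qed
  qed
qed

lemma sum_TQ: "sum areat TQ = sum areat T - (\<Sum>\<tau>\<in>Lat. areat (sm \<tau>)) + sum areat TBs"
proof -
  have finB: "finite TBs" using TBs(1) by (simp add: tri_ok_def)
  have NP: "ri a \<inter> ri b = {}" if ha: "a \<in> T - Lat" and hb: "b \<in> p1 ` Lat \<union> p2 ` Lat" for a b
  proof -
    obtain \<tau> where "\<tau> \<in> Lat" "b \<in> {p1 \<tau>, p2 \<tau>}" using hb by blast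
    then show ?thesis using L_NP ha by blast
  qed
  have ncN: "ncol a" if "a \<in> T - Lat" for a using that ncolT by blast
  have d1: "(T - Lat) \<inter> p1 ` Lat = {}"
    by (rule class_disj) (use NP ncN in blast)+
  have d2: "((T - Lat) \<union> p1 ` Lat) \<inter> p2 ` Lat = {}"
  proof -
    have "(T - Lat) \<inter> p2 ` Lat = {}" by (rule class_disj) (use NP ncN in blast)+
    moreover have "p1 ` Lat \<inter> p2 ` Lat = {}"
    proof (rule class_disj)
      fix a b assume "a \<in> p1 ` Lat" "b \<in> p2 ` Lat"
      then obtain \<tau> \<tau>' where "\<tau> \<in> Lat" "\<tau>' \<in> Lat" "a = p1 \<tau>" "b = p2 \<tau>'" by auto
      then show "ri a \<inter> ri b = {}"
      proof (cases "\<tau> = \<tau>'")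
        case True then show ?thesis using relint_p12 \<open>\<tau> \<in> Lat\<close> \<open>a = p1 \<tau>\<close> \<open>b = p2 \<tau>'\<close> by blast
      next
        case False then show ?thesis using L_PP \<open>\<tau> \<in> Lat\<close> \<open>\<tau>' \<in> Lat\<close> \<open>a = p1 \<tau>\<close> \<open>b = p2 \<tau>'\<close> by blast
      qed
    next
      fix a assume "a \<in> p1 ` Lat" then show "ncol a" using pieces_ncol by blast
    qed
    ultimately show ?thesis by blast
  qed
  have d3: "((T - Lat) \<union> p1 ` Lat \<union> p2 ` Lat) \<inter> TBs = {}"
  proof -
    have ncB: "ncol a" if "a \<in> TBs" for a using that TBs(1) by (simp add: tri_ok_def)
    have BP: "ri a \<inter> ri b = {}" if ha: "a \<in> TBs" and hb: "b \<in> p1 ` Lat \<union> p2 ` Lat" for a b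
    proof -
      obtain \<tau> where "\<tau> \<in> Lat" "b \<in> {p1 \<tau>, p2 \<tau>}" using hb by blast
      then show ?thesis using L_BP ha by blast
    qed
    have "TBs \<inter> (T - Lat) = {}" by (rule class_disj) (use L_BN ncB in blast)+
    moreover have "TBs \<inter> p1 ` Lat = {}" by (rule class_disj) (use BP ncB in blast)+
    moreover have "TBs \<inter> p2 ` Lat = {}" by (rule class_disj) (use BP ncB in blast)+
    ultimately show ?thesis by blast
  qed
  have e0: "sum areat TQ = sum areat (T - Lat) + sum areat (p1 ` Lat) + sum areat (p2 ` Lat) + sum areat TBs"
    unfolding TQ_def using finT finLat finB d1 d2 d3
    by (simp add: sum.union_disjoint)
  have e1: "sum areat (p1 ` Lat) = (\<Sum>\<tau>\<in>Lat. areat (p1 \<tau>))" by (simp add: sum.reindex inj_p1)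
  have e2: "sum areat (p2 ` Lat) = (\<Sum>\<tau>\<in>Lat. areat (p2 \<tau>))" by (simp add: sum.reindex inj_p2)
  have e3: "(\<Sum>\<tau>\<in>Lat. areat (p1 \<tau>)) + (\<Sum>\<tau>\<in>Lat. areat (p2 \<tau>)) = (\<Sum>\<tau>\<in>Lat. areat \<tau> - areat (sm \<tau>))"
    by (simp add: sum.distrib[symmetric] area_pieces)
  have e4: "sum areat (T - Lat) = sum areat T - sum areat Lat"
    using finT LatT by (simp add: sum_diff)
  have e5: "(\<Sum>\<tau>\<in>Lat. areat \<tau> - areat (sm \<tau>)) = sum areat Lat - (\<Sum>\<tau>\<in>Lat. areat (sm \<tau>))"
    by (simp add: sum_subtractf)
  show ?thesis using e0 e1 e2 e3 e4 e5 by linarith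
qed


definition Lp where "Lp y = y - (y \<bullet> u) *\<^sub>R u"

lemma linear_Lp: "linear Lp"
  by (rule linearI) (auto simp: Lp_def algebra_simps inner_add_left)

lemma prj_Lp: "prj = (\<lambda>y. (t + v \<bullet> u) *\<^sub>R u + Lp y)"
  by (auto simp: prj_def Lp_def inner_diff_left algebra_simps)

lemma prj_hull: "prj ` (convex hull S) = convex hull (prj ` S)"
proof -
  have "prj ` X = (+) ((t + v \<bullet> u) *\<^sub>R u) ` (Lp ` X)" for X
    by (auto simp: prj_Lp image_image)
  then show ?thesis
    by (simp add: convex_hull_linear_image[OF linear_Lp] convex_hull_translation)
qed

lemma prj_Hp: "prj y \<in> Hp"
  using uu by (simp add: prj_def Hp_def inner_add_left inner_diff_left)

definition ptri where "ptri \<tau> = (prj v, prj (b1 \<tau>), prj (c1 \<tau>))"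

lemma area_ptri: "\<tau> \<in> Lat \<Longrightarrow> areat (ptri \<tau>) = sb \<tau> * sc \<tau> * \<bar>Nv \<tau> \<bullet> u\<bar> / 2"
proof -
  assume \<tau>: "\<tau> \<in> Lat"
  note S = s_props[OF \<tau>]
  have d: "prj y - prj v = Lp (y - v)" for y
    using linear_Lp by (simp add: prj_Lp linear_diff)
  have "(prj (b1 \<tau>) - prj v) \<times> (prj (c1 \<tau>) - prj v) = (((b1 \<tau> - v) \<times> (c1 \<tau> - v)) \<bullet> u) *\<^sub>R u"
    unfolding d Lp_def by (rule cross_proj[OF uu])
  moreover have "(b1 \<tau> - v) \<times> (c1 \<tau> - v) = (sb \<tau> * sc \<tau>) *\<^sub>R Nv \<tau>"
    using nrm_pieces(3)[of \<tau>] by (simp add: sm_def nrm_def)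
  ultimately have "norm ((prj (b1 \<tau>) - prj v) \<times> (prj (c1 \<tau>) - prj v)) = sb \<tau> * sc \<tau> * \<bar>Nv \<tau> \<bullet> u\<bar>"
    using u1 S by (simp add: abs_mult)
  then show ?thesis by (simp add: ptri_def areat_def tri_area_def)
qed

lemma base_bound: "sum areat TBs \<le> (\<Sum>\<tau>\<in>Lat. sb \<tau> * sc \<tau> * \<bar>Nv \<tau> \<bullet> u\<bar> / 2)"
proof -
  obtain e1 e2 where o: "orthon e1 e2" and c: "e1 \<times> e2 = u" using frame_exists uu by blast
  define p0 where "p0 = v + t *\<^sub>R u"
  define \<phi> where "\<phi> = pmap p0 e1 e2"
  have rng: "range \<phi> = Hp"
  proof -
    have "u \<bullet> (x - p0) = (x - v) \<bullet> u - t" for x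
      using uu by (simp add: p0_def inner_diff_right inner_add_right inner_commute)
    then show ?thesis using range_pmap[OF o, of p0] c by (auto simp: \<phi>_def Hp_def)
  qed
  have okB: "tri_ok TBs" by (rule TBs(1))
  have finB: "finite TBs" using okB by (simp add: tri_ok_def)
  have "sum areat TBs = measure lebesgue (\<Union>a\<in>TBs. \<phi> -` hullt a)"
    unfolding \<phi>_def by (rule measure_union_in[OF o okB, symmetric]) (use TBs(3) rng \<phi>_def in auto)
  also have "(\<Union>a\<in>TBs. \<phi> -` hullt a) = \<phi> -` Bs" using TBs(2) by blast
  finally have eB: "sum areat TBs = measure lebesgue (\<phi> -` Bs)" .
  have cB: "compact (\<phi> -` Bs)"
  proof -
    have "(\<Union>a\<in>TBs. \<phi> -` hullt a) = \<phi> -` Bs" using TBs(2) by blast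
    moreover have "compact (\<phi> -` hullt a)" if "a \<in> TBs" for a
      using compact_vimage_hullt(2)[OF o] TBs(3)[OF that] rng by (simp add: \<phi>_def)
    ultimately show ?thesis using finB by (metis compact_UN)
  qed
  have vt: "vertt (ptri \<tau>) \<subseteq> range \<phi>" for \<tau> using prj_Hp rng by (auto simp: ptri_def vertt_def)
  have cP: "compact (\<phi> -` hullt (ptri \<tau>))" for \<tau>
    using compact_vimage_hullt(2)[OF o vt[of \<tau>, unfolded \<phi>_def]] by (simp add: \<phi>_def)
  have sub: "\<phi> -` Bs \<subseteq> (\<Union>\<tau>\<in>Lat. \<phi> -` hullt (ptri \<tau>))"
  proof
    fix z assume "z \<in> \<phi> -` Bs"
    then obtain \<tau> where "\<tau> \<in> Lat" "\<phi> z \<in> prj ` (convex hull {v, b1 \<tau>, c1 \<tau>})" using Bs_cover by blast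
    then show "z \<in> (\<Union>\<tau>\<in>Lat. \<phi> -` hullt (ptri \<tau>))"
      by (auto simp: prj_hull ptri_def hullt_def)
  qed
  have "measure lebesgue (\<phi> -` Bs) \<le> measure lebesgue (\<Union>\<tau>\<in>Lat. \<phi> -` hullt (ptri \<tau>))"
  proof (rule measure_mono_fmeasurable[OF sub])
    show "\<phi> -` Bs \<in> sets lebesgue" using cB by (simp add: lmeasurable_compact fmeasurableD)
    have "compact (\<Union>\<tau>\<in>Lat. \<phi> -` hullt (ptri \<tau>))" using finLat cP by blast
    then show "(\<Union>\<tau>\<in>Lat. \<phi> -` hullt (ptri \<tau>)) \<in> lmeasurable" by (simp add: lmeasurable_compact)
  qed
  also have "\<dots> \<le> (\<Sum>\<tau>\<in>Lat. measure lebesgue (\<phi> -` hullt (ptri \<tau>)))"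
    by (rule measure_UNION_le[OF finLat]) (use cP in \<open>simp add: lmeasurable_compact fmeasurableD\<close>)
  also have "\<dots> = (\<Sum>\<tau>\<in>Lat. areat (ptri \<tau>))"
  proof (rule sum.cong[OF refl])
    fix \<tau> assume "\<tau> \<in> Lat"
    have "prj v \<in> range \<phi>" "prj (b1 \<tau>) \<in> range \<phi>" "prj (c1 \<tau>) \<in> range \<phi>" using prj_Hp rng by auto
    then show "measure lebesgue (\<phi> -` hullt (ptri \<tau>)) = areat (ptri \<tau>)"
      using measure_pmap_triangle[OF o] by (simp add: \<phi>_def ptri_def hullt_def areat_def)
  qed
  also have "\<dots> = (\<Sum>\<tau>\<in>Lat. sb \<tau> * sc \<tau> * \<bar>Nv \<tau> \<bullet> u\<bar> / 2)" by (simp add: area_ptri)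
  finally show ?thesis using eB by simp
qed


lemma area_Q: "surface_area Q \<le> surface_area P - t\<^sup>2 *
   (\<Sum>\<tau>\<in>Lat. (norm (Nv \<tau>) - \<bar>Nv \<tau> \<bullet> u\<bar>) / (2 * (((bo \<tau> - v) \<bullet> u) * ((co \<tau> - v) \<bullet> u))))"
proof -
  have sQ: "surface_area Q = sum areat TQ" by (rule surface_area_eq[OF triangulates_TQ])
  have sP: "surface_area P = sum areat T" by (rule surface_area_eq[OF triT])
  have smt: "areat (sm \<tau>) = sb \<tau> * sc \<tau> * norm (Nv \<tau>) / 2" if "\<tau> \<in> Lat" for \<tau>
    using s_props[OF that] by (simp only: areat_nrm nrm_pieces norm_scaleR) (simp add: abs_mult)
  have ss: "sb \<tau> * sc \<tau> = t\<^sup>2 / (((bo \<tau> - v) \<bullet> u) * ((co \<tau> - v) \<bullet> u))" for \<tau>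
    by (simp add: sb_def sc_def power2_eq_square)
  have "sum areat TQ \<le> sum areat T - (\<Sum>\<tau>\<in>Lat. areat (sm \<tau>)) + (\<Sum>\<tau>\<in>Lat. sb \<tau> * sc \<tau> * \<bar>Nv \<tau> \<bullet> u\<bar> / 2)"
    using sum_TQ base_bound by simp
  also have "\<dots> = sum areat T - (\<Sum>\<tau>\<in>Lat. sb \<tau> * sc \<tau> * (norm (Nv \<tau>) - \<bar>Nv \<tau> \<bullet> u\<bar>) / 2)"
  proof -
    have a: "(\<Sum>\<tau>\<in>Lat. areat (sm \<tau>)) = (\<Sum>\<tau>\<in>Lat. sb \<tau> * sc \<tau> * norm (Nv \<tau>) / 2)"
      by (rule sum.cong) (simp_all add: smt)
    have b: "(\<Sum>\<tau>\<in>Lat. sb \<tau> * sc \<tau> * (norm (Nv \<tau>) - \<bar>Nv \<tau> \<bullet> u\<bar>) / 2)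
       = (\<Sum>\<tau>\<in>Lat. sb \<tau> * sc \<tau> * norm (Nv \<tau>) / 2 - sb \<tau> * sc \<tau> * \<bar>Nv \<tau> \<bullet> u\<bar> / 2)"
      by (rule sum.cong) (simp_all add: right_diff_distrib diff_divide_distrib)
    show ?thesis unfolding a b sum_subtractf by simp
  qed
  also have "(\<Sum>\<tau>\<in>Lat. sb \<tau> * sc \<tau> * (norm (Nv \<tau>) - \<bar>Nv \<tau> \<bullet> u\<bar>) / 2)
     = t\<^sup>2 * (\<Sum>\<tau>\<in>Lat. (norm (Nv \<tau>) - \<bar>Nv \<tau> \<bullet> u\<bar>) / (2 * (((bo \<tau> - v) \<bullet> u) * ((co \<tau> - v) \<bullet> u))))"
    by (simp add: sum_distrib_left ss mult.commute mult.left_commute)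
  finally show ?thesis using sQ sP by simp
qed

lemma vol_Q: "measure lebesgue Q \<ge> measure lebesgue P - (CC * t) ^ 3 * measure lebesgue (ball (0::pt3) 1)"
  "measure lebesgue Q \<le> measure lebesgue P"
proof -
  have bU: "bounded U" by (rule bounded_subset[of "ball v r"]) (auto simp: U_def)
  have mU: "U \<in> lmeasurable" using bU open_U by (simp add: lmeasurable_open)
  have mP: "P \<in> lmeasurable" using compP by (simp add: lmeasurable_compact)
  have mPU: "P \<inter> U \<in> sets lebesgue" using mU mP by (simp add: fmeasurableD sets.Int)
  have QPU: "Q = P - (P \<inter> U)" by (auto simp: Q_def)
  have mQ: "measure lebesgue Q = measure lebesgue P - measure lebesgue (P \<inter> U)"
    unfolding QPU by (rule measure_Diff) (use mP mPU in \<open>auto simp: fmeasurable_def\<close>)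
  have sub: "P \<inter> U \<subseteq> ball v (CC * t)" using cap_bound by (auto simp: dist_norm norm_minus_commute)
  have "measure lebesgue (P \<inter> U) \<le> measure lebesgue (ball v (CC * t))"
    by (rule measure_mono_fmeasurable[OF sub mPU]) simp
  also have "measure lebesgue (ball v (CC * t)) = measure lborel (ball v (CC * t))"
    by (intro measure_completion) simp
  also have "\<dots> = (CC * t) ^ DIM(pt3) * measure lborel (ball (0::pt3) 1)"
    using content_ball_conv_unit_ball[of "CC * t" v] CC_ge1 t0 by simp
  also have "measure lborel (ball (0::pt3) 1) = measure lebesgue (ball (0::pt3) 1)"
    by (intro measure_completion[symmetric]) simp
  finally have "measure lebesgue (P \<inter> U) \<le> (CC * t) ^ 3 * measure lebesgue (ball (0::pt3) 1)" by simp
  then show "measure lebesgue Q \<ge> measure lebesgue P - (CC * t) ^ 3 * measure lebesgue (ball (0::pt3) 1)"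
    using mQ by simp
  show "measure lebesgue Q \<le> measure lebesgue P" using mQ by simp
qed

end

context vtx
begin

definition kap where
  "kap = (\<Sum>\<tau>\<in>Lat. (norm ((bo \<tau> - v) \<times> (co \<tau> - v)) - \<bar>((bo \<tau> - v) \<times> (co \<tau> - v)) \<bullet> u\<bar>)
           / (2 * (((bo \<tau> - v) \<bullet> u) * ((co \<tau> - v) \<bullet> u))))"

lemma kap_pos: "kap > 0"
  unfolding kap_def
proof (rule sum_pos[OF finLat Lat_ne])
  fix \<tau> assume \<tau>: "\<tau> \<in> Lat"
  define N where "N = (bo \<tau> - v) \<times> (co \<tau> - v)"
  have N0: "N \<noteq> 0"
  proof -
    have "ncol (v, bo \<tau>, co \<tau>)" using Lat_props(3)[OF \<tau>] by (simp add: ncol_def)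
    then show ?thesis using ncol_nrm by (fastforce simp: N_def nrm_def)
  qed
  have ib: "(bo \<tau> - v) \<bullet> u > 0" "(co \<tau> - v) \<bullet> u > 0" using Lat_props[OF \<tau>] by auto
  have "\<bar>N \<bullet> u\<bar> < norm N"
  proof -
    have le: "\<bar>N \<bullet> u\<bar> \<le> norm N" using Cauchy_Schwarz_ineq2[of N u] u1 by simp
    have "\<bar>N \<bullet> u\<bar> \<noteq> norm N * norm u"
    proof
      assume "\<bar>N \<bullet> u\<bar> = norm N * norm u"
      then have "norm N *\<^sub>R u = norm u *\<^sub>R N \<or> norm N *\<^sub>R u = - norm u *\<^sub>R N"
        by (simp add: norm_cauchy_schwarz_abs_eq)
      then have "norm N *\<^sub>R u = N \<or> norm N *\<^sub>R u = - N" using u1 by simp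
      moreover have z: "(bo \<tau> - v) \<bullet> N = 0" by (simp add: N_def dot_cross_self)
      ultimately have "(bo \<tau> - v) \<bullet> (norm N *\<^sub>R u) = 0"
      proof (elim disjE)
        assume h: "norm N *\<^sub>R u = N" show ?thesis by (simp only: h z)
      next
        assume h: "norm N *\<^sub>R u = - N" show ?thesis by (simp only: h z inner_minus_right minus_zero)
      qed
      then have "norm N * ((bo \<tau> - v) \<bullet> u) = 0" by simp
      then show False using N0 ib by simp
    qed
    then show ?thesis using le u1 by simp
  qed
  then show "0 < (norm N - \<bar>N \<bullet> u\<bar>) / (2 * (((bo \<tau> - v) \<bullet> u) * ((co \<tau> - v) \<bullet> u)))"
    using ib by simp
qed

definition VP where "VP = measure lebesgue P"

lemma VP_pos: "VP > 0"
proof -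
  obtain e where e: "e > 0" "ball pp e \<subseteq> P"
    using pp(1) by (meson open_contains_ball open_interior interior_subset subset_trans)
  have mP: "P \<in> lmeasurable" using compP by (simp add: lmeasurable_compact)
  have "measure lebesgue (ball pp e) \<le> VP"
    unfolding VP_def by (rule measure_mono_fmeasurable[OF e(2)]) (use mP in \<open>auto simp: fmeasurableD\<close>)
  moreover have "measure lebesgue (ball pp e) > 0"
  proof -
    have "measure lebesgue (ball pp e) = measure lborel (ball pp e)" by (intro measure_completion) simp
    moreover have "measure lborel (ball pp e) > 0" by (rule content_ball_pos[OF e(1)])
    ultimately show ?thesis by linarith
  qed
  ultimately show ?thesis by linarith
qed

definition cst where "cst = CC ^ 3 * measure lebesgue (ball (0::pt3) 1)"

lemma cst_nonneg: "cst \<ge> 0" using CC_ge1 by (simp add: cst_def)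

definition AP where "AP = surface_area P"

lemma AP_nonneg: "AP \<ge> 0"
  using surface_area_eq[OF triT] areat_nonneg by (simp add: AP_def sum_nonneg)

definition t0 where "t0 = min tg (min (VP * kap / (AP * cst + 1)) (min (VP / (cst + 1)) 1))"

lemma t0_pos: "t0 > 0"
  using tg_pos VP_pos kap_pos AP_nonneg cst_nonneg
  by (simp add: t0_def add_nonneg_pos)

lemma main:
  assumes t: "0 < t" "t < t0"
  shows "surface_area (rescale_to_volume (volume P) (truncate P v u r t)) < surface_area P"
proof -
  have ttg: "t < tg" using t by (simp add: t0_def)
  interpret vt: vtxt P v u r T t by unfold_locales (use t ttg in auto)
  have t1: "t < 1" "t < VP / (cst + 1)" "t < VP * kap / (AP * cst + 1)" using t by (auto simp: t0_def)
  define VQ where "VQ = measure lebesgue vt.Q"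
  have VQ1: "VQ \<ge> VP - cst * t ^ 3"
    using vt.vol_Q(1) by (simp add: VQ_def VP_def cst_def power_mult_distrib mult_ac)
  have VQ2: "VQ \<le> VP" using vt.vol_Q(2) by (simp add: VQ_def VP_def)
  have t3: "t ^ 3 \<le> t"
  proof -
    have tt: "t * t \<le> 1" using t t1(1) by (simp add: mult_le_one)
    have "t * t * t \<le> 1 * t" by (rule mult_right_mono[OF tt]) (use t in simp)
    then show ?thesis by (simp add: power3_eq_cube)
  qed
  have "cst * t < VP"
  proof -
    have "(cst + 1) * t < VP" using t1(2) cst_nonneg by (simp add: field_simps)
    then show ?thesis using t by (simp add: algebra_simps)
  qed
  moreover have "cst * t ^ 3 \<le> cst * t" using t3 cst_nonneg by (simp add: mult_left_mono)
  ultimately have VQpos: "VQ > 0" using VQ1 by linarith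
  define x where "x = VP / VQ"
  have x1: "x \<ge> 1" using VQ2 VQpos by (simp add: x_def)
  define k where "k = x powr (1/3)"
  have kpos: "k > 0" using x1 by (simp add: k_def)
  have k2: "k\<^sup>2 \<le> x"
  proof -
    have "k\<^sup>2 = x powr (2/3)" using x1 by (simp add: k_def power2_eq_square powr_add[symmetric])
    also have "\<dots> \<le> x powr 1" using x1 by (intro powr_mono) auto
    finally show ?thesis using x1 by simp
  qed
  have resc: "rescale_to_volume (volume P) (truncate P v u r t) = (\<lambda>y. k *\<^sub>R y) ` vt.Q"
    by (simp add: rescale_to_volume_def vt.Q_trunc volume_def k_def x_def VP_def VQ_def)
  have sa: "surface_area ((\<lambda>y. k *\<^sub>R y) ` vt.Q) = k\<^sup>2 * surface_area vt.Q"
    using surface_area_scale[OF _ vt.triangulates_TQ] kpos by simp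
  define AQ where "AQ = surface_area vt.Q"
  have AQ0: "AQ \<ge> 0" using surface_area_eq[OF vt.triangulates_TQ] areat_nonneg by (simp add: AQ_def sum_nonneg)
  have AQ1: "AQ \<le> AP - t\<^sup>2 * kap"
    using vt.area_Q by (simp add: AQ_def AP_def kap_def vt.Nv_def)
  have "k\<^sup>2 * AQ \<le> x * AQ" using k2 AQ0 by (simp add: mult_right_mono)
  also have "\<dots> \<le> x * (AP - t\<^sup>2 * kap)" using AQ1 x1 by (simp add: mult_left_mono)
  also have "\<dots> < AP"
  proof -
    have "AP * cst * t < VP * kap"
    proof -
      have pos: "AP * cst + 1 > 0" using AP_nonneg cst_nonneg by (simp add: add_nonneg_pos)
      have "t * (AP * cst + 1) < VP * kap" using pos_less_divide_eq[OF pos] t1(3) by blast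
      then have "(AP * cst + 1) * t < VP * kap" by (simp add: mult.commute)
      moreover have "AP * cst * t \<le> (AP * cst + 1) * t" using t by simp
      ultimately show ?thesis by linarith
    qed
    then have "AP * cst * t ^ 3 < VP * kap * t\<^sup>2"
      using t by (simp add: power2_eq_square power3_eq_cube mult_ac)
    moreover have "AP * VQ \<ge> AP * (VP - cst * t ^ 3)" using VQ1 AP_nonneg by (simp add: mult_left_mono)
    ultimately have "VP * (AP - t\<^sup>2 * kap) < AP * VQ" by (simp add: algebra_simps)
    then have "VP * (AP - t\<^sup>2 * kap) / VQ < AP" using VQpos by (simp add: divide_less_eq mult.commute)
    then show ?thesis by (simp add: x_def)
  qed
  finally show ?thesis using resc sa by (simp add: AQ_def AP_def)
qed

end

theorem proposition2p4:
  fixes P :: "(real^3) set" and v u :: "real^3" and r :: real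
  assumes "polyhedron P"
    and "strictly_convex_vertex P v"
    and "norm u = 1" and "r > 0"
    and "convex (P \<inter> cball v r)"
    and "\<forall>x\<in>P \<inter> cball v r. x \<noteq> v \<longrightarrow> inner (x - v) u > 0"
  shows "\<exists>t0>0. \<forall>t. 0 < t \<and> t < t0 \<longrightarrow>
           surface_area (rescale_to_volume (volume P) (truncate P v u r t)) < surface_area P"
proof -
  obtain T where T: "triangulates T (frontier P)" using assms(1) by (auto simp: polyhedron_def)
  interpret vtx P v u r T
    using assms T by unfold_locales (auto simp: polyhedron_def strictly_convex_vertex_def)
  show ?thesis using t0_pos main by blast
qed

end
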